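(* Let $N=(S,T,F,M_0,\ell)$ be a Petri net and $N'=(S',T',F',M'_0,\ell')$ a plain Petri net with $S'\subseteq S$ and $M'_0=M_0\restriction S'$. Suppose there exist sets $T_+\subseteq T$, $T_-\subseteq T$ and a class $NF\subseteq\mathbb Z^T$ such that: (1) $F\restriction(S\cup T_+)$ is acyclic; (2) $F\restriction(S\cup T_-)$ is acyclic; (3) for every $t\in T$ with $\ell(t)\ne\tau$ there is $t'\in T'$ with $\ell'(t')=\ell(t)$ such that ${}^\bullet t'\le{}^*t$ and there is a finite $G\in\mathbb N^T$ with $\ell(G)\equiv\emptyset$ and $[\![t']\!]=[\![t+G]\!]$, where ${}^*t$ is the multiset of faithful origins of $t$ w.r.t. $T_+$ and $S'\cup\{s\in S\mid M_0(s)>0\}$; (4) there is a function $f:T\to\mathbb N$ with $f(t)>0$ for all $t$, extended to finite signed multisets by $f(G)=\sum_tG(t)f(t)$, such that for each finite $G\in\mathbb Z^T$ with $\ell(G)\equiv\emptyset$ there is a finite $H\in NF$ with $\ell(H)\equiv\emptyset$, $[\![H]\!]=[\![G]\!]$ and $f(H)=f(G)$; (5) for every $M'\in\mathbb N^{S'}$, $U'\in\mathbb N^{T'}$ and $U\in\mathbb N^T$ with $\ell(U)=\ell'(U')$ and $M'+{}^\bullet U'\in[M'_0\rangle_{N'}$ there is a finite $H_{M',U}\in\mathbb N^{T_+}$ with $\ell(H_{M',U})\equiv\emptyset$ such that for each finite $H\in NF$ with $M:=M'+{}^\bullet U'+(M_0-M'_0)+[\![H]\!]-{}^\bullet U\in\mathbb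 N^S$ and $M+{}^\bullet U\in[M_0\rangle_N$: (a) $M_{M',U}:=M'+{}^\bullet U'+(M_0-M'_0)+[\![H_{M',U}]\!]-{}^\bullet U\in\mathbb N^S$; (b) if $M'\xrightarrow{a}$ in $N'$ with $a\in\mathrm{Act}$ then $M_{M',U}\xrightarrow{a}$ in $N$; (c) $H\le H_{M',U}$; (d) if $H(u)<0$ then $u\in T_-$; (e) if $H(u)<0$ and $H(t)>0$ then ${}^\bullet u\cap{}^\bullet t=\emptyset$; (f) if $H(u)<0$ and $(M+{}^\bullet U)[t\rangle$ with $\ell(t)\ne\tau$ then ${}^\bullet u\cap{}^\bullet t=\emptyset$; (g) if $(M+{}^\bullet U)[\{t\}+\{u\}\rangle$ and $t',u'\in T'$ with $\ell'(t')=\ell(t)$ and $\ell'(u')=\ell(u)$, then ${}^\bullet t'\cap{}^\bullet u'=\emptyset$. Then $N\approx^\Delta_{bSTb}N'$.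
   Context: Fix visible actions $\mathrm{Act}$ and $\tau\notin\mathrm{Act}$. A Petri net $(S,T,F,M_0,\ell)$ has disjoint $S,T$, $F:(S\times T)\cup(T\times S)\to\mathbb N$, $M_0\in\mathbb N^S$, $\ell:T\to\mathrm{Act}\cup\{\tau\}$. A signed multiset over $X$ is a function $X\to\mathbb Z$ (a multiset if values are $\ge0$); finite if it has finitely many nonzero values; $\le$, $+$, $-$, $\cap$ (min), $\cup$ (max) are pointwise; signed multisets over different sets are identified when they agree on the common domain and are zero elsewhere (so $M'\in\mathbb N^{S'}$ is viewed as a signed multiset over $S$). ${}^\bullet x(y)=F(y,x)$, $x^\bullet(y)=F(x,y)$, extended to finite signed multisets $G$ of transitions by ${}^\bullet G=\sum_tG(t)\,{}^\bullet t$ etc., and $[\![G]\!]=G^\bullet-{}^\bullet G$. $\ell(G)=\sum_tG(t)\{\ell(t)\}$; $\ell(G)\equiv\emptyset$ means $\ell(G)(a)=0$ for every $a\in\mathrm{Act}$. For a finite nonempty multiset $G$ of transitions, $M[G\rangle M'$ iff ${}^\bullet G\le M$ and $M'=M-{}^\bullet G+G^\bullet$; $[M_0\rangle_N$ is the set of reachable markings. $M\xrightarrow{\alpha}$ iff $M[t\rangle$ for some $t$ with label $\alpha$. Plain: $\ell$ injective and never $\tau$. $F\restriction(S\cup T_+)$ acyclic means there is no nonempty path $x_0x_1\cdots x_n$ with $x_0=x_n$, all $x_i\in S\cup T_+$ and $F(x_i,x_{i+1})>0$. Faithful origins (w.r.t. $T_+\subseteq T$ and $S_+\subseteq S$): a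 path is $x_0x_1\cdots x_n$ with $F(x_i,x_{i+1})>0$, with arc weight $F(\pi)=\prod_{i<n}F(x_i,x_{i+1})$. A place $s$ is faithful iff $|\{s\}\cap S_+|+\sum_{t\in T_+}F(t,s)=1$. A path is faithful iff every $x_i$ with $0\le i<n$ is a transition in $T_+$ or a faithful place. ${}^*x\in(\mathbb N\cup\{\infty\})^{S_+}$ is given by ${}^*x(s)=\sup\{F(\pi)\mid\pi$ a faithful path from $s\in S_+$ to $x\}$ (0 if none). $\approx^\Delta_{bSTb}$: branching ST-bisimilarity with explicit divergence, i.e. existence of a relation $\mathcal B$ between ST-markings relating $(M_0,\varepsilon)$ and $(M'_0,\varepsilon)$ such that: if $\mathfrak M_1\mathcal B\mathfrak M_2$ and $\mathfrak M_1\xrightarrow{\alpha}\mathfrak M_1'$ then $\mathfrak M_2\Rightarrow\mathfrak M_2^\dagger\xrightarrow{(\alpha)}\mathfrak M_2'$ with $\mathfrak M_1\mathcal B\mathfrak M_2^\dagger$ and $\mathfrak M_1'\mathcal B\mathfrak M_2'$ ($\Rightarrow$ reflexive transitive closure of $\xrightarrow{\tau}$; $\xrightarrow{(\alpha)}$ means $\xrightarrow{\alpha}$ or, if $\alpha=\tau$, staying put), and symmetrically; and if $\mathfrak M_1\mathcal B\mathfrak M_2$ and an infinite $\tau$-sequence from $\mathfrak M_1$ has all states related to $\mathfrak M_2$ then there is an infinite $\tau$-sequence from $\mathfrak M_2$ with all pairs of states related, and symmetrically. ST-markings are $(M,U)\in\mathbb N^S\times T^*$; $(M,U)\xrightarrow{a^+}(M-{}^\bullet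 t,Ut)$ iff $\ell(t)=a\in\mathrm{Act}$, $M[t\rangle$; $(M,U)\xrightarrow{a^{-n}}(M+t^\bullet,U^{-n})$ iff the $n$-th element $t$ of $U$ has label $a$ ($U^{-n}$ removes it); $(M,U)\xrightarrow{\tau}(M',U)$ iff $M[t\rangle M'$ with $\ell(t)=\tau$. *)

theory Defs
  imports Main "HOL-Library.Extended_Nat"
begin

text \<open>Labels: \<open>Some a\<close> is the visible action a, \<open>None\<close> is tau.
  Places have type 's, transitions type 't.  \<open>pre N t s\<close> = F(s,t), \<open>post N t s\<close> = F(t,s).\<close>

record ('s, 't, 'a) pnet =
  places :: "'s set"
  trans  :: "'t set"
  pre    :: "'t \<Rightarrow> 's \<Rightarrow> nat"
  post   :: "'t \<Rightarrow> 's \<Rightarrow> nat"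
  init   :: "'s \<Rightarrow> nat"
  lab    :: "'t \<Rightarrow> 'a option"

definition wf_net :: "('s, 't, 'a) pnet \<Rightarrow> bool" where
  "wf_net N \<longleftrightarrow>
     (\<forall>t s. (pre N t s \<noteq> 0 \<or> post N t s \<noteq> 0) \<longrightarrow> t \<in> trans N \<and> s \<in> places N) \<and>
     (\<forall>s. init N s \<noteq> 0 \<longrightarrow> s \<in> places N)"

definition plain :: "('s, 't, 'a) pnet \<Rightarrow> bool" where
  "plain N \<longleftrightarrow> inj_on (lab N) (trans N) \<and> (\<forall>t \<in> trans N. lab N t \<noteq> None)"

definition supp :: "('x \<Rightarrow> int) \<Rightarrow> 'x set" where
  "supp G = {x. G x \<noteq> 0}"

definition fin :: "('x \<Rightarrow> int) \<Rightarrow> bool" where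
  "fin G \<longleftrightarrow> finite (supp G)"

text \<open>\<open>G \<in> \<int>^X\<close>: zero outside X; \<open>G \<in> \<nat>^X\<close>: additionally nonnegative.\<close>
definition signed_over :: "('x \<Rightarrow> int) \<Rightarrow> 'x set \<Rightarrow> bool" where
  "signed_over G X \<longleftrightarrow> supp G \<subseteq> X"

definition mset_over :: "('x \<Rightarrow> int) \<Rightarrow> 'x set \<Rightarrow> bool" where
  "mset_over G X \<longleftrightarrow> supp G \<subseteq> X \<and> (\<forall>x. 0 \<le> G x)"

definition one :: "'x \<Rightarrow> 'x \<Rightarrow> int" where
  "one t = (\<lambda>x. if x = t then 1 else 0)"

definition pre_ms :: "('s, 't, 'a) pnet \<Rightarrow> ('t \<Rightarrow> int) \<Rightarrow> 's \<Rightarrow> int" where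
  "pre_ms N G = (\<lambda>s. \<Sum>t\<in>supp G. G t * int (pre N t s))"

definition post_ms :: "('s, 't, 'a) pnet \<Rightarrow> ('t \<Rightarrow> int) \<Rightarrow> 's \<Rightarrow> int" where
  "post_ms N G = (\<lambda>s. \<Sum>t\<in>supp G. G t * int (post N t s))"

definition eff :: "('s, 't, 'a) pnet \<Rightarrow> ('t \<Rightarrow> int) \<Rightarrow> 's \<Rightarrow> int" where
  "eff N G = (\<lambda>s. post_ms N G s - pre_ms N G s)"

definition labm :: "('s, 't, 'a) pnet \<Rightarrow> ('t \<Rightarrow> int) \<Rightarrow> 'a option \<Rightarrow> int" where
  "labm N G = (\<lambda>\<alpha>. \<Sum>t\<in>{t \<in> supp G. lab N t = \<alpha>}. G t)"

definition lab_empty :: "('s, 't, 'a) pnet \<Rightarrow> ('t \<Rightarrow> int) \<Rightarrow> bool" where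
  "lab_empty N G \<longleftrightarrow> (\<forall>a. labm N G (Some a) = 0)"

definition disjoint_ms :: "('s \<Rightarrow> nat) \<Rightarrow> ('s \<Rightarrow> nat) \<Rightarrow> bool" where
  "disjoint_ms A B \<longleftrightarrow> (\<forall>s. min (A s) (B s) = 0)"

definition fires :: "('s, 't, 'a) pnet \<Rightarrow> ('s \<Rightarrow> int) \<Rightarrow> ('t \<Rightarrow> int) \<Rightarrow> ('s \<Rightarrow> int) \<Rightarrow> bool" where
  "fires N M G M' \<longleftrightarrow> mset_over G (trans N) \<and> fin G \<and> supp G \<noteq> {} \<and>
     (\<forall>s. pre_ms N G s \<le> M s) \<and> M' = (\<lambda>s. M s - pre_ms N G s + post_ms N G s)"

definition enabled :: "('s, 't, 'a) pnet \<Rightarrow> ('s \<Rightarrow> int) \<Rightarrow> ('t \<Rightarrow> int) \<Rightarrow> bool" where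
  "enabled N M G \<longleftrightarrow> (\<exists>M'. fires N M G M')"

definition init_m :: "('s, 't, 'a) pnet \<Rightarrow> 's \<Rightarrow> int" where
  "init_m N = (\<lambda>s. int (init N s))"

inductive_set reach :: "('s, 't, 'a) pnet \<Rightarrow> ('s \<Rightarrow> int) set" for N where
  reach_init: "init_m N \<in> reach N"
| reach_step: "M \<in> reach N \<Longrightarrow> fires N M G M' \<Longrightarrow> M' \<in> reach N"

definition can_do :: "('s, 't, 'a) pnet \<Rightarrow> ('s \<Rightarrow> int) \<Rightarrow> 'a option \<Rightarrow> bool" where
  "can_do N M \<alpha> \<longleftrightarrow> (\<exists>t. lab N t = \<alpha> \<and> enabled N M (one t))"

datatype ('s, 't) node = P 's | Tr 't

fun arcw :: "('s, 't, 'a) pnet \<Rightarrow> ('s, 't) node \<Rightarrow> ('s, 't) node \<Rightarrow> nat" where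
  "arcw N (P s) (Tr t) = pre N t s"
| "arcw N (Tr t) (P s) = post N t s"
| "arcw N _ _ = 0"

definition flow :: "('s, 't, 'a) pnet \<Rightarrow> ('s, 't) node rel" where
  "flow N = {(x, y). 0 < arcw N x y}"

definition acyclic_on :: "('s, 't, 'a) pnet \<Rightarrow> 't set \<Rightarrow> bool" where
  "acyclic_on N X \<longleftrightarrow>
     (let V = P ` places N \<union> Tr ` X in acyclic (flow N \<inter> (V \<times> V)))"

definition faithful_place :: "('s, 't, 'a) pnet \<Rightarrow> 't set \<Rightarrow> 's set \<Rightarrow> 's \<Rightarrow> bool" where
  "faithful_place N Tp Sp s \<longleftrightarrow>
     finite {t \<in> Tp. 0 < post N t s} \<and>
     (if s \<in> Sp then 1 else 0) + (\<Sum>t\<in>{t \<in> Tp. 0 < post N t s}. post N t s) = 1"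

definition is_path :: "('s, 't, 'a) pnet \<Rightarrow> ('s, 't) node list \<Rightarrow> bool" where
  "is_path N xs \<longleftrightarrow> xs \<noteq> [] \<and> (\<forall>i < length xs - 1. 0 < arcw N (xs ! i) (xs ! Suc i))"

definition path_weight :: "('s, 't, 'a) pnet \<Rightarrow> ('s, 't) node list \<Rightarrow> nat" where
  "path_weight N xs = (\<Prod>i<length xs - 1. arcw N (xs ! i) (xs ! Suc i))"

definition faithful_path :: "('s, 't, 'a) pnet \<Rightarrow> 't set \<Rightarrow> 's set \<Rightarrow> ('s, 't) node list \<Rightarrow> bool" where
  "faithful_path N Tp Sp xs \<longleftrightarrow> is_path N xs \<and>
     (\<forall>i < length xs - 1. (case xs ! i of Tr t \<Rightarrow> t \<in> Tp | P s \<Rightarrow> faithful_place N Tp Sp s))"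

definition origins :: "('s, 't, 'a) pnet \<Rightarrow> 't set \<Rightarrow> 's set \<Rightarrow> ('s, 't) node \<Rightarrow> 's \<Rightarrow> enat" where
  "origins N Tp Sp x = (\<lambda>s. if s \<in> Sp then
      Sup {enat (path_weight N xs) | xs. faithful_path N Tp Sp xs \<and> hd xs = P s \<and> last xs = x}
    else 0)"

datatype 'a st_lab = Start 'a | Fin 'a nat | Tau

type_synonym ('s, 't) st_marking = "('s \<Rightarrow> int) \<times> 't list"

text \<open>Positions in U are counted from 0 (the n-th element is \<open>U ! n\<close>).\<close>
inductive st_step :: "('s, 't, 'a) pnet \<Rightarrow> ('s, 't) st_marking \<Rightarrow> 'a st_lab \<Rightarrow> ('s, 't) st_marking \<Rightarrow> bool"
  for N where
  st_start: "lab N t = Some a \<Longrightarrow> enabled N M (one t) \<Longrightarrow>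
     st_step N (M, U) (Start a) (\<lambda>s. M s - int (pre N t s), U @ [t])"
| st_fin: "n < length U \<Longrightarrow> lab N (U ! n) = Some a \<Longrightarrow>
     st_step N (M, U) (Fin a n) (\<lambda>s. M s + int (post N (U ! n) s), take n U @ drop (Suc n) U)"
| st_tau: "lab N t = None \<Longrightarrow> fires N M (one t) M' \<Longrightarrow> st_step N (M, U) Tau (M', U)"

definition bb_half :: "('p \<Rightarrow> 'a st_lab \<Rightarrow> 'p \<Rightarrow> bool) \<Rightarrow> ('q \<Rightarrow> 'a st_lab \<Rightarrow> 'q \<Rightarrow> bool)
    \<Rightarrow> ('p \<Rightarrow> 'q \<Rightarrow> bool) \<Rightarrow> bool" where
  "bb_half st1 st2 B \<longleftrightarrow>
    (\<forall>p q \<alpha> p'. B p q \<and> st1 p \<alpha> p' \<longrightarrow>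
       (\<exists>q1 q'. (\<lambda>x y. st2 x Tau y)\<^sup>*\<^sup>* q q1 \<and> B p q1 \<and> B p' q' \<and>
                 (st2 q1 \<alpha> q' \<or> (\<alpha> = Tau \<and> q' = q1)))) \<and>
    (\<forall>p q ps. B p q \<and> ps 0 = p \<and> (\<forall>i. st1 (ps i) Tau (ps (Suc i)) \<and> B (ps i) q) \<longrightarrow>
       (\<exists>qs. qs 0 = q \<and> (\<forall>i. st2 (qs i) Tau (qs (Suc i))) \<and> (\<forall>i j. B (ps i) (qs j))))"

definition bbisim_div :: "('p \<Rightarrow> 'a st_lab \<Rightarrow> 'p \<Rightarrow> bool) \<Rightarrow> ('q \<Rightarrow> 'a st_lab \<Rightarrow> 'q \<Rightarrow> bool)
    \<Rightarrow> ('p \<Rightarrow> 'q \<Rightarrow> bool) \<Rightarrow> bool" where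
  "bbisim_div st1 st2 B \<longleftrightarrow> bb_half st1 st2 B \<and> bb_half st2 st1 (conversep B)"

definition bSTb_div_equiv :: "('s, 't, 'a) pnet \<Rightarrow> ('s2, 't2, 'a) pnet \<Rightarrow> bool" where
  "bSTb_div_equiv N N' \<longleftrightarrow>
     (\<exists>B. B (init_m N, []) (init_m N', []) \<and> bbisim_div (st_step N) (st_step N') B)"

end

theory Submission
  imports Defs
begin


definition lin :: "('t \<Rightarrow> int) \<Rightarrow> ('t \<Rightarrow> int) \<Rightarrow> int" where
  "lin c G = (\<Sum>t\<in>supp G. G t * c t)"

lemma lin_superset: "finite A \<Longrightarrow> supp G \<subseteq> A \<Longrightarrow> lin c G = (\<Sum>t\<in>A. G t * c t)"
  unfolding lin_def
  by (rule sum.mono_neutral_left) (auto simp: supp_def)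

lemma fin_add: "fin G \<Longrightarrow> fin K \<Longrightarrow> fin (\<lambda>x. G x + K x)"
  unfolding fin_def supp_def by (rule finite_subset[of _ "{x. G x \<noteq> 0} \<union> {x. K x \<noteq> 0}"]) auto
lemma fin_diff: "fin G \<Longrightarrow> fin K \<Longrightarrow> fin (\<lambda>x. G x - K x)"
  unfolding fin_def supp_def by (rule finite_subset[of _ "{x. G x \<noteq> 0} \<union> {x. K x \<noteq> 0}"]) auto
lemma fin_one[simp]: "fin (one t)"
  unfolding fin_def supp_def one_def by (rule finite_subset[of _ "{t}"]) auto
lemma supp_one[simp]: "supp (one t) = {t}"
  unfolding supp_def one_def by auto
lemma fin_zero[simp]: "fin (\<lambda>x. 0)" unfolding fin_def supp_def by auto
lemma supp_zero[simp]: "supp (\<lambda>x. 0) = {}" unfolding supp_def by auto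

lemma lin_add: "fin G \<Longrightarrow> fin K \<Longrightarrow> lin c (\<lambda>x. G x + K x) = lin c G + lin c K"
proof -
  assume a: "fin G" "fin K"
  let ?A = "supp G \<union> supp K"
  have f: "finite ?A" using a by (simp add: fin_def)
  have "lin c (\<lambda>x. G x + K x) = (\<Sum>t\<in>?A. (G t + K t) * c t)"
    by (rule lin_superset[OF f]) (auto simp: supp_def)
  also have "\<dots> = (\<Sum>t\<in>?A. G t * c t) + (\<Sum>t\<in>?A. K t * c t)"
    by (simp add: distrib_right sum.distrib)
  also have "\<dots> = lin c G + lin c K"
    using lin_superset[OF f, of G c] lin_superset[OF f, of K c] by auto
  finally show ?thesis .
qed

lemma lin_diff: "fin G \<Longrightarrow> fin K \<Longrightarrow> lin c (\<lambda>x. G x - K x) = lin c G - lin c K"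
proof -
  assume a: "fin G" "fin K"
  let ?A = "supp G \<union> supp K"
  have f: "finite ?A" using a by (simp add: fin_def)
  have "lin c (\<lambda>x. G x - K x) = (\<Sum>t\<in>?A. (G t - K t) * c t)"
    by (rule lin_superset[OF f]) (auto simp: supp_def)
  also have "\<dots> = (\<Sum>t\<in>?A. G t * c t) - (\<Sum>t\<in>?A. K t * c t)"
    by (simp add: left_diff_distrib sum_subtractf)
  also have "\<dots> = lin c G - lin c K"
    using lin_superset[OF f, of G c] lin_superset[OF f, of K c] by auto
  finally show ?thesis .
qed

lemma lin_one[simp]: "lin c (one t) = c t"
  unfolding lin_def supp_one by (simp add: one_def)
lemma lin_zero[simp]: "lin c (\<lambda>x. 0) = 0"
  unfolding lin_def by simp

lemma lin_mono: "fin G \<Longrightarrow> fin K \<Longrightarrow> (\<forall>x. G x \<le> K x) \<Longrightarrow> (\<forall>x. 0 \<le> c x) \<Longrightarrow> lin c G \<le> lin c K"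
proof -
  assume a: "fin G" "fin K" "\<forall>x. G x \<le> K x" "\<forall>x. 0 \<le> c x"
  let ?A = "supp G \<union> supp K"
  have f: "finite ?A" using a by (simp add: fin_def)
  have "lin c G = (\<Sum>t\<in>?A. G t * c t)" by (rule lin_superset[OF f]) auto
  also have "\<dots> \<le> (\<Sum>t\<in>?A. K t * c t)"
    by (rule sum_mono) (simp add: a mult_right_mono)
  also have "\<dots> = lin c K" by (rule lin_superset[OF f, symmetric]) auto
  finally show ?thesis .
qed

lemma pre_ms_lin: "pre_ms N G s = lin (\<lambda>t. int (pre N t s)) G"
  by (simp add: pre_ms_def lin_def)
lemma post_ms_lin: "post_ms N G s = lin (\<lambda>t. int (post N t s)) G"
  by (simp add: post_ms_def lin_def)
lemma eff_lin: "eff N G s = lin (\<lambda>t. int (post N t s) - int (pre N t s)) G"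
  by (simp add: eff_def post_ms_def pre_ms_def lin_def sum_subtractf right_diff_distrib)
lemma labm_lin: "fin G \<Longrightarrow> labm N G \<alpha> = lin (\<lambda>t. if lab N t = \<alpha> then 1 else 0) G"
  unfolding labm_def lin_def fin_def
  by (simp add: sum.inter_filter if_distrib cong: if_cong)

lemma eff_add: "fin G \<Longrightarrow> fin K \<Longrightarrow> eff N (\<lambda>x. G x + K x) s = eff N G s + eff N K s"
  by (simp add: eff_lin lin_add)
lemma eff_diff: "fin G \<Longrightarrow> fin K \<Longrightarrow> eff N (\<lambda>x. G x - K x) s = eff N G s - eff N K s"
  by (simp add: eff_lin lin_diff)
lemma eff_one: "eff N (one t) s = int (post N t s) - int (pre N t s)"
  by (simp add: eff_lin)
lemma pre_one[simp]: "pre_ms N (one t) s = int (pre N t s)"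
  by (simp add: pre_ms_lin)
lemma post_one[simp]: "post_ms N (one t) s = int (post N t s)"
  by (simp add: post_ms_lin)
lemma eff_zero[simp]: "eff N (\<lambda>x. 0) s = 0" by (simp add: eff_lin)
lemma labm_add: "fin G \<Longrightarrow> fin K \<Longrightarrow> labm N (\<lambda>x. G x + K x) a = labm N G a + labm N K a"
  by (simp add: labm_lin fin_add lin_add)
lemma labm_diff: "fin G \<Longrightarrow> fin K \<Longrightarrow> labm N (\<lambda>x. G x - K x) a = labm N G a - labm N K a"
  by (simp add: labm_lin fin_diff lin_diff)
lemma labm_one: "labm N (one t) a = (if lab N t = a then 1 else 0)"
  by (simp add: labm_lin)

lemma lab_empty_add: "fin G \<Longrightarrow> fin K \<Longrightarrow> lab_empty N G \<Longrightarrow> lab_empty N K \<Longrightarrow> lab_empty N (\<lambda>x. G x + K x)"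
  by (simp add: lab_empty_def labm_add)
lemma lab_empty_diff: "fin G \<Longrightarrow> fin K \<Longrightarrow> lab_empty N G \<Longrightarrow> lab_empty N K \<Longrightarrow> lab_empty N (\<lambda>x. G x - K x)"
  by (simp add: lab_empty_def labm_diff)
lemma lab_empty_one: "lab N t = None \<Longrightarrow> lab_empty N (one t)"
  by (simp add: lab_empty_def labm_one)

definition cnt :: "'t list \<Rightarrow> 't \<Rightarrow> int" where
  "cnt U = (\<lambda>t. int (count_list U t))"

lemma supp_cnt[simp]: "supp (cnt U) = set U"
  by (auto simp: supp_def cnt_def count_list_0_iff)
lemma fin_cnt[simp]: "fin (cnt U)" by (simp add: fin_def)
lemma cnt_nonneg: "0 \<le> cnt U x" by (simp add: cnt_def)

lemma lin_cnt: "lin c (cnt U) = sum_list (map c U)"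
proof (induction U)
  case Nil then show ?case by (simp add: lin_def)
next
  case (Cons x U)
  have "cnt (x # U) = (\<lambda>y. one x y + cnt U y)" by (auto simp: cnt_def one_def)
  then show ?case using Cons by (simp add: lin_add)
qed

lemma cnt_append: "cnt (U @ V) = (\<lambda>y. cnt U y + cnt V y)"
  by (auto simp: cnt_def count_list_append)

lemma pre_cnt: "pre_ms N (cnt U) s = (\<Sum>t\<leftarrow>U. int (pre N t s))"
  by (simp add: pre_ms_lin lin_cnt)
lemma post_cnt: "post_ms N (cnt U) s = (\<Sum>t\<leftarrow>U. int (post N t s))"
  by (simp add: post_ms_lin lin_cnt)

lemma labm_cnt: "labm N (cnt U) a = int (length (filter (\<lambda>t. lab N t = a) U))"
proof -
  have "labm N (cnt U) a = (\<Sum>t\<leftarrow>U. (if lab N t = a then 1 else 0))"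
    by (simp add: labm_lin lin_cnt)
  also have "\<dots> = int (length (filter (\<lambda>t. lab N t = a) U))"
    by (induction U) auto
  finally show ?thesis .
qed

lemma mset_over_cnt: "set U \<subseteq> X \<Longrightarrow> mset_over (cnt U) X"
  by (simp add: mset_over_def cnt_nonneg)

lemma sum_list_nonneg_ge: "x \<in> set U \<Longrightarrow> (\<forall>y. 0 \<le> g y) \<Longrightarrow> g x \<le> (\<Sum>t\<leftarrow>U. (g t :: int))"
proof (induction U)
  case Nil then show ?case by simp
next
  case (Cons a U)
  have "0 \<le> (\<Sum>t\<leftarrow>U. g t)" using Cons(3) by (intro sum_list_nonneg) auto
  then show ?case using Cons by (auto intro: add_increasing2 add_increasing)
qed

lemma mset_over_one: "mset_over (one t) X \<longleftrightarrow> t \<in> X"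
  unfolding mset_over_def supp_one by (auto simp: one_def)

lemma fires_one: "fires N M (one t) M' \<longleftrightarrow> t \<in> trans N \<and> (\<forall>s. int (pre N t s) \<le> M s) \<and>
   M' = (\<lambda>s. M s - int (pre N t s) + int (post N t s))"
  by (simp add: fires_def mset_over_one)

lemma enabled_one: "enabled N M (one t) \<longleftrightarrow> t \<in> trans N \<and> (\<forall>s. int (pre N t s) \<le> M s)"
  by (simp add: enabled_def fires_one)

lemma enabled_two: "t \<in> trans N \<Longrightarrow> u \<in> trans N \<Longrightarrow> (\<forall>s. int (pre N t s) + int (pre N u s) \<le> M s)
   \<Longrightarrow> enabled N M (\<lambda>x. one t x + one u x)"
proof -
  assume a: "t \<in> trans N" "u \<in> trans N" "\<forall>s. int (pre N t s) + int (pre N u s) \<le> M s"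
  let ?G = "\<lambda>x. one t x + one u x"
  have "fin ?G" by (simp add: fin_add)
  moreover have "t \<in> supp ?G" by (auto simp: supp_def one_def)
  moreover have "supp ?G \<subseteq> trans N" using a by (auto simp: supp_def one_def split: if_splits)
  moreover have "\<forall>x. 0 \<le> ?G x" by (simp add: one_def)
  moreover have "\<forall>s. pre_ms N ?G s \<le> M s" using a by (simp add: pre_ms_lin lin_add)
  ultimately show ?thesis unfolding enabled_def fires_def mset_over_def by blast
qed




lemma is_path_Cons2: "is_path N (x # y # r) \<longleftrightarrow> 0 < arcw N x y \<and> is_path N (y # r)"
  unfolding is_path_def by (simp add: All_less_Suc2)

lemma path_weight_Cons2: "path_weight N (x # y # r) = arcw N x y * path_weight N (y # r)"
  unfolding path_weight_def by (simp del: prod.lessThan_Suc add: prod.lessThan_Suc_shift)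

lemma faithful_path_Cons2: "faithful_path N Tp Sp (x # y # r) \<longleftrightarrow>
   0 < arcw N x y \<and> (case x of Tr t \<Rightarrow> t \<in> Tp | P s \<Rightarrow> faithful_place N Tp Sp s) \<and> faithful_path N Tp Sp (y # r)"
  unfolding faithful_path_def by (auto simp: is_path_Cons2 All_less_Suc2)

lemma path_weight_pos: "is_path N xs \<Longrightarrow> 0 < path_weight N xs"
proof (induction xs rule: induct_list012)
  case 1 then show ?case by (simp add: path_weight_def)
next
  case (2 x) then show ?case by (simp add: path_weight_def)
next
  case (3 x y zs) then show ?case by (simp add: path_weight_Cons2 is_path_Cons2)
qed

lemma acyc_min:
  assumes ac: "acyclic_on N X" and wf: "wf_net N" and YX: "Y \<subseteq> X" and fY: "finite Y" and ne: "Y \<noteq> {}"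
  shows "\<exists>u\<in>Y. \<forall>v\<in>Y. \<forall>s. 0 < pre N u s \<longrightarrow> post N v s = 0"
proof -
  define V where "V = P ` places N \<union> Tr ` X"
  define E where "E = flow N \<inter> (V \<times> V)"
  have acE: "acyclic E" using ac unfolding acyclic_on_def Let_def V_def E_def .
  define R where "R = {(v,u). v \<in> Y \<and> u \<in> Y \<and> (\<exists>s. 0 < post N v s \<and> 0 < pre N u s)}"
  have RE: "(Tr v, Tr u) \<in> E\<^sup>+" if "(v,u) \<in> R" for v u
  proof -
    from that obtain s where s: "v \<in> Y" "u \<in> Y" "0 < post N v s" "0 < pre N u s" by (auto simp: R_def)
    have sp: "s \<in> places N" using wf s(3) by (auto simp: wf_net_def)
    have "(Tr v, P s) \<in> flow N" "(P s, Tr u) \<in> flow N" using s by (auto simp: flow_def)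
    moreover have "Tr v \<in> V" "Tr u \<in> V" "P s \<in> V" using s sp YX by (auto simp: V_def)
    ultimately have "(Tr v, P s) \<in> E" "(P s, Tr u) \<in> E" by (auto simp: E_def)
    then show ?thesis by (meson r_into_trancl trancl_into_trancl2)
  qed
  have RT: "(Tr x, Tr y) \<in> E\<^sup>+" if "(x,y) \<in> R\<^sup>+" for x y
    using that
  proof (induction rule: trancl_induct)
    case (base y) then show ?case by (rule RE)
  next
    case (step y z)
    have "(Tr y, Tr z) \<in> E\<^sup>+" using step(2) by (rule RE)
    then show ?case using step(3) by (rule trancl_trans[rotated])
  qed
  have acR: "acyclic R" unfolding acyclic_def
  proof (intro allI notI)
    fix x assume "(x,x) \<in> R\<^sup>+"
    then have "(Tr x, Tr x) \<in> E\<^sup>+" by (rule RT)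
    with acE show False unfolding acyclic_def by blast
  qed
  have finR: "finite R"
  proof (rule finite_subset[of _ "Y \<times> Y"])
    show "R \<subseteq> Y \<times> Y" unfolding R_def by blast
    show "finite (Y \<times> Y)" using fY by blast
  qed
  have "wf R" by (rule finite_acyclic_wf[OF finR acR])
  then obtain z where z: "z \<in> Y" "\<And>y. (y, z) \<in> R \<Longrightarrow> y \<notin> Y" using ne by (rule wfE_min') blast
  show ?thesis
  proof (intro bexI[OF _ z(1)] ballI allI impI)
    fix v s assume "v \<in> Y" "0 < pre N z s"
    show "post N v s = 0"
    proof (rule ccontr)
      assume "post N v s \<noteq> 0"
      then have "(v, z) \<in> R" using \<open>v \<in> Y\<close> \<open>0 < pre N z s\<close> z(1) unfolding R_def by auto
      then show False using z(2) \<open>v \<in> Y\<close> by blast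
    qed
  qed
qed




lemma signed_add: "signed_over G X \<Longrightarrow> signed_over K X \<Longrightarrow> signed_over (\<lambda>x. G x + K x) X"
  unfolding signed_over_def supp_def subset_iff mem_Collect_eq by (metis add.left_neutral)
lemma signed_diff: "signed_over G X \<Longrightarrow> signed_over K X \<Longrightarrow> signed_over (\<lambda>x. G x - K x) X"
  unfolding signed_over_def supp_def subset_iff mem_Collect_eq by (metis diff_self)
lemma mset_signed: "mset_over G X \<Longrightarrow> signed_over G X"
  unfolding signed_over_def mset_over_def by auto
lemma signed_one: "t \<in> X \<Longrightarrow> signed_over (one t) X"
  unfolding signed_over_def supp_one by auto

lemma cnt_snoc: "cnt (U @ [t]) = (\<lambda>x. cnt U x + one t x)"
  by (auto simp: cnt_append cnt_def one_def)

lemma cnt_remove: "n < length U \<Longrightarrow> cnt U = (\<lambda>x. cnt (take n U @ drop (Suc n) U) x + one (U!n) x)"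
proof -
  assume n: "n < length U"
  have "U = take n U @ U!n # drop (Suc n) U" using n by (simp add: id_take_nth_drop)
  then have "cnt U = cnt (take n U @ [U!n] @ drop (Suc n) U)" by simp
  then show ?thesis by (auto simp: cnt_append cnt_def one_def)
qed

lemma pre_cnt_snoc: "pre_ms N (cnt (U @ [t])) s = pre_ms N (cnt U) s + int (pre N t s)"
  by (simp add: cnt_snoc pre_ms_lin lin_add)

lemma pre_cnt_remove: "n < length U \<Longrightarrow>
  pre_ms N (cnt U) s = pre_ms N (cnt (take n U @ drop (Suc n) U)) s + int (pre N (U!n) s)"
  by (subst cnt_remove, assumption) (simp add: pre_ms_lin lin_add)

lemma pre_cnt_nonneg: "0 \<le> pre_ms N (cnt U) s"
  unfolding pre_cnt by (rule sum_list_nonneg) auto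

lemma pre_cnt_ge: "t \<in> set U \<Longrightarrow> int (pre N t s) \<le> pre_ms N (cnt U) s"
  unfolding pre_cnt by (rule sum_list_nonneg_ge) auto

lemma labm_eq_lists: "list_all2 (\<lambda>t t'. lab N t = lab N' t') U U' \<Longrightarrow> labm N (cnt U) = labm N' (cnt U')"
proof -
  assume a: "list_all2 (\<lambda>t t'. lab N t = lab N' t') U U'"
  have "length (filter (\<lambda>t. lab N t = x) U) = length (filter (\<lambda>t. lab N' t = x) U')" for x
    using a by (induction rule: list_all2_induct) auto
  then show ?thesis by (auto simp: labm_cnt)
qed

lemma fires_shift: "fires N M (one t) M2 \<Longrightarrow> (\<forall>s. 0 \<le> X s) \<Longrightarrow>
   fires N (\<lambda>s. M s + X s) (one t) (\<lambda>s. M2 s + X s)"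
  unfolding fires_one by (auto simp: add_increasing2 fun_eq_iff)

lemma wf_pre: "wf_net N \<Longrightarrow> s \<notin> places N \<Longrightarrow> pre N t s = 0"
  unfolding wf_net_def by blast
lemma wf_post: "wf_net N \<Longrightarrow> s \<notin> places N \<Longrightarrow> post N t s = 0"
  unfolding wf_net_def by blast

lemma mset_minus_pre: "wf_net N \<Longrightarrow> mset_over M (places N) \<Longrightarrow> \<forall>s. int (pre N t s) \<le> M s \<Longrightarrow>
   mset_over (\<lambda>s. M s - int (pre N t s)) (places N)"
  unfolding mset_over_def supp_def subset_iff mem_Collect_eq
  by (metis diff_ge_0_iff_ge diff_zero of_nat_0 wf_pre)

lemma mset_plus_post: "wf_net N \<Longrightarrow> mset_over M (places N) \<Longrightarrow>
   mset_over (\<lambda>s. M s + int (post N t s)) (places N)"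
  unfolding mset_over_def supp_def subset_iff mem_Collect_eq
  by (metis add.right_neutral add_increasing2 of_nat_0 of_nat_0_le_iff wf_post)

lemma mset_over_fire: "wf_net N \<Longrightarrow> mset_over M (places N) \<Longrightarrow> fires N M (one t) M2 \<Longrightarrow> mset_over M2 (places N)"
  unfolding fires_one using mset_plus_post mset_minus_pre by fastforce

locale ctx =
  fixes N :: "('s, 't, 'a) pnet" and N' :: "('s, 't2, 'a) pnet"
    and Tp Tm :: "'t set" and NF :: "('t \<Rightarrow> int) set" and f :: "'t \<Rightarrow> nat"
  assumes wfN: "wf_net N" and wfN': "wf_net N'" and plainN': "plain N'"
    and S'_sub: "places N' \<subseteq> places N"
    and M0': "\<forall>s. init N' s = (if s \<in> places N' then init N s else 0)"
    and Tp_sub: "Tp \<subseteq> trans N" and Tm_sub: "Tm \<subseteq> trans N"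
    and NF_sub: "\<forall>H \<in> NF. signed_over H (trans N)"
    and h1: "acyclic_on N Tp"
    and h2: "acyclic_on N Tm"
    and h3: "\<forall>t \<in> trans N. lab N t \<noteq> None \<longrightarrow>
       (\<exists>t' \<in> trans N'. lab N' t' = lab N t \<and>
          (\<forall>s. enat (pre N' t' s) \<le>
                 origins N Tp (places N' \<union> {s \<in> places N. 0 < init N s}) (Tr t) s) \<and>
          (\<exists>G. fin G \<and> mset_over G (trans N) \<and> lab_empty N G \<and>
               eff N' (one t') = eff N (\<lambda>x. one t x + G x)))"
    and f_pos: "\<forall>t \<in> trans N. 0 < f t"
    and h4f: "\<forall>G. fin G \<and> signed_over G (trans N) \<and> lab_empty N G \<longrightarrow>
          (\<exists>H \<in> NF. fin H \<and> lab_empty N H \<and> eff N H = eff N G \<and>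
             (\<Sum>t\<in>supp H. H t * int (f t)) = (\<Sum>t\<in>supp G. G t * int (f t)))"
    and h5: "\<forall>M' U' U. mset_over M' (places N') \<and> mset_over U' (trans N') \<and> fin U' \<and>
       mset_over U (trans N) \<and> fin U \<and> labm N U = labm N' U' \<and>
       (\<lambda>s. M' s + pre_ms N' U' s) \<in> reach N' \<longrightarrow>
       (\<exists>HMU. fin HMU \<and> mset_over HMU Tp \<and> lab_empty N HMU \<and>
          (\<forall>H \<in> NF. fin H \<longrightarrow>
             (let M = (\<lambda>s. M' s + pre_ms N' U' s + (init_m N s - init_m N' s) + eff N H s - pre_ms N U s);
                  MMU = (\<lambda>s. M' s + pre_ms N' U' s + (init_m N s - init_m N' s) + eff N HMU s - pre_ms N U s);
                  MU = (\<lambda>s. M s + pre_ms N U s)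
              in mset_over M (places N) \<and> MU \<in> reach N \<longrightarrow>
                 mset_over MMU (places N) \<and>
                 (\<forall>a. can_do N' M' (Some a) \<longrightarrow> can_do N MMU (Some a)) \<and>
                 (\<forall>t. H t \<le> HMU t) \<and>
                 (\<forall>u. H u < 0 \<longrightarrow> u \<in> Tm) \<and>
                 (\<forall>u t. H u < 0 \<and> 0 < H t \<longrightarrow> disjoint_ms (pre N u) (pre N t)) \<and>
                 (\<forall>u t. H u < 0 \<and> enabled N MU (one t) \<and> lab N t \<noteq> None \<longrightarrow>
                    disjoint_ms (pre N u) (pre N t)) \<and>
                 (\<forall>t u t' u'. enabled N MU (\<lambda>x. one t x + one u x) \<and>
                    t' \<in> trans N' \<and> u' \<in> trans N' \<and> lab N' t' = lab N t \<and> lab N' u' = lab N u \<longrightarrow>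
                    disjoint_ms (pre N' t') (pre N' u')))))"
begin

definition Mx :: "('s \<Rightarrow> int) \<Rightarrow> 't2 list \<Rightarrow> 't list \<Rightarrow> ('t \<Rightarrow> int) \<Rightarrow> 's \<Rightarrow> int" where
  "Mx M' U' U H = (\<lambda>s. M' s + pre_ms N' (cnt U') s + (init_m N s - init_m N' s) + eff N H s - pre_ms N (cnt U) s)"

definition Bm :: "('s, 't) st_marking \<Rightarrow> ('s, 't2) st_marking \<Rightarrow> bool" where
  "Bm p q \<longleftrightarrow> list_all2 (\<lambda>t t'. lab N t = lab N' t') (snd p) (snd q) \<and>
     set (snd p) \<subseteq> trans N \<and> set (snd q) \<subseteq> trans N' \<and>
     mset_over (fst q) (places N') \<and> (\<lambda>s. fst q s + pre_ms N' (cnt (snd q)) s) \<in> reach N' \<and>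
     mset_over (fst p) (places N) \<and> (\<lambda>s. fst p s + pre_ms N (cnt (snd p)) s) \<in> reach N \<and>
     (\<exists>H\<in>NF. fin H \<and> lab_empty N H \<and> fst p = Mx (fst q) (snd q) (snd p) H)"

definition good :: "('t \<Rightarrow> int) \<Rightarrow> ('s \<Rightarrow> int) \<Rightarrow> 't2 list \<Rightarrow> 't list \<Rightarrow> ('t \<Rightarrow> int) \<Rightarrow> bool" where
  "good HMU M' U' U H \<longleftrightarrow>
                 mset_over (Mx M' U' U HMU) (places N) \<and>
                 (\<forall>a. can_do N' M' (Some a) \<longrightarrow> can_do N (Mx M' U' U HMU) (Some a)) \<and>
                 (\<forall>t. H t \<le> HMU t) \<and>
                 (\<forall>u. H u < 0 \<longrightarrow> u \<in> Tm) \<and>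
                 (\<forall>u t. H u < 0 \<and> 0 < H t \<longrightarrow> disjoint_ms (pre N u) (pre N t)) \<and>
                 (\<forall>u t. H u < 0 \<and> enabled N (\<lambda>s. Mx M' U' U H s + pre_ms N (cnt U) s) (one t) \<and> lab N t \<noteq> None \<longrightarrow>
                    disjoint_ms (pre N u) (pre N t)) \<and>
                 (\<forall>t u t' u'. enabled N (\<lambda>s. Mx M' U' U H s + pre_ms N (cnt U) s) (\<lambda>x. one t x + one u x) \<and>
                    t' \<in> trans N' \<and> u' \<in> trans N' \<and> lab N' t' = lab N t \<and> lab N' u' = lab N u \<longrightarrow>
                    disjoint_ms (pre N' t') (pre N' u'))"

lemma Bm_def': "Bm (M,U) (M',U') \<longleftrightarrow> list_all2 (\<lambda>t t'. lab N t = lab N' t') U U' \<and>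
     set U \<subseteq> trans N \<and> set U' \<subseteq> trans N' \<and>
     mset_over M' (places N') \<and> (\<lambda>s. M' s + pre_ms N' (cnt U') s) \<in> reach N' \<and>
     mset_over M (places N) \<and> (\<lambda>s. M s + pre_ms N (cnt U) s) \<in> reach N \<and>
     (\<exists>H\<in>NF. fin H \<and> lab_empty N H \<and> M = Mx M' U' U H)"
  by (simp add: Bm_def)

lemma Mx_add: "fin H \<Longrightarrow> fin K \<Longrightarrow> Mx M' U' U (\<lambda>x. H x + K x) = (\<lambda>s. Mx M' U' U H s + eff N K s)"
  by (simp add: Mx_def eff_add fun_eq_iff)

lemma Mx_eff_cong: "eff N H = eff N K \<Longrightarrow> Mx M' U' U H = Mx M' U' U K"
  by (simp add: Mx_def)

lemma h5_use:
  assumes "Bm (M,U) (M',U')"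
  obtains HMU where "fin HMU" "mset_over HMU Tp" "lab_empty N HMU"
    "\<And>H. H \<in> NF \<Longrightarrow> fin H \<Longrightarrow> mset_over (Mx M' U' U H) (places N) \<Longrightarrow>
       (\<lambda>s. Mx M' U' U H s + pre_ms N (cnt U) s) \<in> reach N \<Longrightarrow> good HMU M' U' U H"
proof -
  from assms have a: "list_all2 (\<lambda>t t'. lab N t = lab N' t') U U'" "set U \<subseteq> trans N" "set U' \<subseteq> trans N'"
    "mset_over M' (places N')" "(\<lambda>s. M' s + pre_ms N' (cnt U') s) \<in> reach N'"
    by (auto simp: Bm_def')
  have "mset_over M' (places N') \<and> mset_over (cnt U') (trans N') \<and> fin (cnt U') \<and>
       mset_over (cnt U) (trans N) \<and> fin (cnt U) \<and> labm N (cnt U) = labm N' (cnt U') \<and>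
       (\<lambda>s. M' s + pre_ms N' (cnt U') s) \<in> reach N'"
    using a by (simp add: mset_over_cnt labm_eq_lists)
  then obtain HMU where H: "fin HMU" "mset_over HMU Tp" "lab_empty N HMU"
    "\<forall>H \<in> NF. fin H \<longrightarrow>
             (let M = (\<lambda>s. M' s + pre_ms N' (cnt U') s + (init_m N s - init_m N' s) + eff N H s - pre_ms N (cnt U) s);
                  MMU = (\<lambda>s. M' s + pre_ms N' (cnt U') s + (init_m N s - init_m N' s) + eff N HMU s - pre_ms N (cnt U) s);
                  MU = (\<lambda>s. M s + pre_ms N (cnt U) s)
              in mset_over M (places N) \<and> MU \<in> reach N \<longrightarrow>
                 mset_over MMU (places N) \<and>
                 (\<forall>a. can_do N' M' (Some a) \<longrightarrow> can_do N MMU (Some a)) \<and>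
                 (\<forall>t. H t \<le> HMU t) \<and>
                 (\<forall>u. H u < 0 \<longrightarrow> u \<in> Tm) \<and>
                 (\<forall>u t. H u < 0 \<and> 0 < H t \<longrightarrow> disjoint_ms (pre N u) (pre N t)) \<and>
                 (\<forall>u t. H u < 0 \<and> enabled N MU (one t) \<and> lab N t \<noteq> None \<longrightarrow>
                    disjoint_ms (pre N u) (pre N t)) \<and>
                 (\<forall>t u t' u'. enabled N MU (\<lambda>x. one t x + one u x) \<and>
                    t' \<in> trans N' \<and> u' \<in> trans N' \<and> lab N' t' = lab N t \<and> lab N' u' = lab N u \<longrightarrow>
                    disjoint_ms (pre N' t') (pre N' u')))"
    using h5 by blast
  show ?thesis
  proof (rule that[OF H(1-3)])
    fix H assume A: "H \<in> NF" "fin H" "mset_over (Mx M' U' U H) (places N)"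
       "(\<lambda>s. Mx M' U' U H s + pre_ms N (cnt U) s) \<in> reach N"
    note imp = H(4)[rule_format, OF A(1,2), unfolded Let_def]
    note A3 = A(3)[unfolded Mx_def]
    note A4 = A(4)[unfolded Mx_def]
    show "good HMU M' U' U H"
      unfolding good_def Mx_def
      by (rule mp[OF imp]) (rule conjI[OF A3 A4])
  qed
qed

lemma vis_N': "t' \<in> trans N' \<Longrightarrow> lab N' t' \<noteq> None"
  using plainN' unfolding plain_def by blast

lemma inj_N': "t1 \<in> trans N' \<Longrightarrow> t2 \<in> trans N' \<Longrightarrow> lab N' t1 = lab N' t2 \<Longrightarrow> t1 = t2"
  using plainN' unfolding plain_def inj_on_def by blast

lemma HMU_vis: "fin K \<Longrightarrow> mset_over K X \<Longrightarrow> lab_empty N K \<Longrightarrow> lab N t \<noteq> None \<Longrightarrow> K t = 0"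
proof -
  assume a: "fin K" "mset_over K X" "lab_empty N K" "lab N t \<noteq> None"
  then obtain b where b: "lab N t = Some b" by auto
  have "labm N K (Some b) = 0" using a(3) by (simp add: lab_empty_def)
  then have s: "(\<Sum>x\<in>{x \<in> supp K. lab N x = Some b}. K x) = 0" by (simp add: labm_def)
  have fA: "finite {x \<in> supp K. lab N x = Some b}" using a(1) by (simp add: fin_def)
  have nn: "\<forall>x\<in>{x \<in> supp K. lab N x = Some b}. 0 \<le> K x" using a(2) by (simp add: mset_over_def)
  have "(\<Sum>x\<in>{x \<in> supp K. lab N x = Some b}. K x) = 0 \<longleftrightarrow> (\<forall>x\<in>{x \<in> supp K. lab N x = Some b}. K x = 0)"
    by (rule sum_nonneg_eq_0_iff[OF fA]) (use nn in blast)
  then have z: "\<forall>x\<in>{x \<in> supp K. lab N x = Some b}. K x = 0" using s by blast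
  show "K t = 0"
  proof (rule ccontr)
    assume "K t \<noteq> 0"
    then have "t \<in> {x \<in> supp K. lab N x = Some b}" using b by (simp add: supp_def)
    then show False using z \<open>K t \<noteq> 0\<close> by blast
  qed
qed

lemma H_vis: "fin H \<Longrightarrow> lab_empty N H \<Longrightarrow> (\<forall>x. lab N x \<noteq> None \<longrightarrow> H x \<le> 0) \<Longrightarrow> lab N t \<noteq> None \<Longrightarrow> H t = 0"
proof -
  assume a: "fin H" "lab_empty N H" "\<forall>x. lab N x \<noteq> None \<longrightarrow> H x \<le> 0" "lab N t \<noteq> None"
  then obtain b where b: "lab N t = Some b" by auto
  have "labm N H (Some b) = 0" using a(2) by (simp add: lab_empty_def)
  then have s: "(\<Sum>x\<in>{x \<in> supp H. lab N x = Some b}. - H x) = 0" by (simp add: labm_def sum_negf)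
  have fA: "finite {x \<in> supp H. lab N x = Some b}" using a(1) by (simp add: fin_def)
  have nn: "\<forall>x\<in>{x \<in> supp H. lab N x = Some b}. 0 \<le> - H x" using a(3) by auto
  have "(\<Sum>x\<in>{x \<in> supp H. lab N x = Some b}. - H x) = 0 \<longleftrightarrow> (\<forall>x\<in>{x \<in> supp H. lab N x = Some b}. - H x = 0)"
    by (rule sum_nonneg_eq_0_iff[OF fA]) (use nn in blast)
  then have z: "\<forall>x\<in>{x \<in> supp H. lab N x = Some b}. - H x = 0" using s by blast
  show "H t = 0"
  proof (rule ccontr)
    assume "H t \<noteq> 0"
    then have "t \<in> {x \<in> supp H. lab N x = Some b}" using b by (simp add: supp_def)
    then show False using z \<open>H t \<noteq> 0\<close> by auto
  qed
qed

lemma Bm_start: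
  assumes B: "Bm (M,U) (M',U')" and t: "t \<in> trans N" and t': "t' \<in> trans N'"
    and l: "lab N t = lab N' t'" and e: "\<forall>s. int (pre N t s) \<le> M s" and e': "\<forall>s. int (pre N' t' s) \<le> M' s"
  shows "Bm (\<lambda>s. M s - int (pre N t s), U @ [t]) (\<lambda>s. M' s - int (pre N' t' s), U' @ [t'])"
proof -
  from B have a: "list_all2 (\<lambda>t t'. lab N t = lab N' t') U U'" "set U \<subseteq> trans N" "set U' \<subseteq> trans N'"
    "mset_over M' (places N')" "(\<lambda>s. M' s + pre_ms N' (cnt U') s) \<in> reach N'"
    "mset_over M (places N)" "(\<lambda>s. M s + pre_ms N (cnt U) s) \<in> reach N"
    and "\<exists>H\<in>NF. fin H \<and> lab_empty N H \<and> M = Mx M' U' U H"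
    by (auto simp: Bm_def')
  then obtain H where H: "H \<in> NF" "fin H" "lab_empty N H" "M = Mx M' U' U H" by blast
  have m1: "mset_over (\<lambda>s. M' s - int (pre N' t' s)) (places N')"
    using mset_minus_pre[OF wfN' a(4) e'] .
  have m2: "mset_over (\<lambda>s. M s - int (pre N t s)) (places N)"
    using mset_minus_pre[OF wfN a(6) e] .
  have r1: "(\<lambda>s. M' s - int (pre N' t' s) + pre_ms N' (cnt (U' @ [t'])) s) = (\<lambda>s. M' s + pre_ms N' (cnt U') s)"
    by (simp add: pre_cnt_snoc fun_eq_iff)
  have r2: "(\<lambda>s. M s - int (pre N t s) + pre_ms N (cnt (U @ [t])) s) = (\<lambda>s. M s + pre_ms N (cnt U) s)"
    by (simp add: pre_cnt_snoc fun_eq_iff)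
  have mx: "(\<lambda>s. M s - int (pre N t s)) = Mx (\<lambda>s. M' s - int (pre N' t' s)) (U' @ [t']) (U @ [t]) H"
    using H(4) by (simp add: Mx_def pre_cnt_snoc fun_eq_iff)
  show ?thesis unfolding Bm_def'
    using a m1 m2 r1 r2 mx H t t' l by (auto intro: list_all2_appendI)
qed

lemma Bm_fin:
  assumes B: "Bm (M,U) (M',U')" and n: "n < length U"
  shows "n < length U'" "lab N (U!n) = lab N' (U'!n)" "lab N' (U'!n) \<noteq> None"
    "Bm (\<lambda>s. M s + int (post N (U!n) s), take n U @ drop (Suc n) U)
        (\<lambda>s. M' s + int (post N' (U'!n) s), take n U' @ drop (Suc n) U')"
proof -
  from B have a: "list_all2 (\<lambda>t t'. lab N t = lab N' t') U U'" "set U \<subseteq> trans N" "set U' \<subseteq> trans N'"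
    "mset_over M' (places N')" "(\<lambda>s. M' s + pre_ms N' (cnt U') s) \<in> reach N'"
    "mset_over M (places N)" "(\<lambda>s. M s + pre_ms N (cnt U) s) \<in> reach N"
    and "\<exists>H\<in>NF. fin H \<and> lab_empty N H \<and> M = Mx M' U' U H"
    by (auto simp: Bm_def')
  then obtain H where H: "H \<in> NF" "fin H" "lab_empty N H" "M = Mx M' U' U H" by blast
  have len: "length U' = length U" using a(1) list_all2_lengthD by fastforce
  show n': "n < length U'" using n len by simp
  define u where "u = U!n"
  define u' where "u' = U'!n"
  have uU: "u \<in> set U" using n by (simp add: u_def)
  have uU': "u' \<in> set U'" using n' by (simp add: u'_def)
  have ut: "u \<in> trans N" using uU a(2) by auto
  have ut': "u' \<in> trans N'" using uU' a(3) by auto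
  have lu: "lab N u = lab N' u'" using list_all2_nthD[OF a(1) n] by (simp add: u_def u'_def)
  show "lab N (U!n) = lab N' (U'!n)" using lu by (simp add: u_def u'_def)
  have vu': "lab N' u' \<noteq> None" using ut' by (rule vis_N')
  show "lab N' (U'!n) \<noteq> None" using vu' by (simp add: u'_def)
  obtain t'' G where tg: "t'' \<in> trans N'" "lab N' t'' = lab N u" "fin G" "mset_over G (trans N)" "lab_empty N G"
       "eff N' (one t'') = eff N (\<lambda>x. one u x + G x)"
  proof -
    have "lab N u \<noteq> None" using lu vu' by simp
    with h3 ut have "\<exists>t' \<in> trans N'. lab N' t' = lab N u \<and>
          (\<forall>s. enat (pre N' t' s) \<le>
                 origins N Tp (places N' \<union> {s \<in> places N. 0 < init N s}) (Tr u) s) \<and>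
          (\<exists>G. fin G \<and> mset_over G (trans N) \<and> lab_empty N G \<and>
               eff N' (one t') = eff N (\<lambda>x. one u x + G x))" by blast
    then show ?thesis using that by blast
  qed
  have "t'' = u'" using inj_N'[OF tg(1) ut'] tg(2) lu by simp
  with tg have eG: "eff N' (one u') = eff N (\<lambda>x. one u x + G x)" by simp
  have sH: "signed_over H (trans N)" using NF_sub H(1) by blast
  have "fin (\<lambda>x. H x - G x) \<and> signed_over (\<lambda>x. H x - G x) (trans N) \<and> lab_empty N (\<lambda>x. H x - G x)"
    using H tg sH by (simp add: fin_diff signed_diff mset_signed lab_empty_diff)
  then obtain H2 where H2: "H2 \<in> NF" "fin H2" "lab_empty N H2" "eff N H2 = eff N (\<lambda>x. H x - G x)"
    using h4f by blast
  define Vn where "Vn = take n U @ drop (Suc n) U"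
  define Vn' where "Vn' = take n U' @ drop (Suc n) U'"
  have pU: "pre_ms N (cnt U) s = pre_ms N (cnt Vn) s + int (pre N u s)" for s
    using pre_cnt_remove[OF n] by (simp add: Vn_def u_def)
  have pU': "pre_ms N' (cnt U') s = pre_ms N' (cnt Vn') s + int (pre N' u' s)" for s
    using pre_cnt_remove[OF n'] by (simp add: Vn'_def u'_def)
  have e1: "int (post N' u' s) - int (pre N' u' s) = int (post N u s) - int (pre N u s) + eff N G s" for s
    using fun_cong[OF eG, of s] tg(3) by (simp add: eff_add eff_one)
  have e2: "eff N H2 s = eff N H s - eff N G s" for s
    using fun_cong[OF H2(4), of s] H(2) tg(3) by (simp add: eff_diff)
  have mx: "(\<lambda>s. M s + int (post N u s)) = Mx (\<lambda>s. M' s + int (post N' u' s)) Vn' Vn H2"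
  proof (rule ext)
    fix s
    have "Mx (\<lambda>s. M' s + int (post N' u' s)) Vn' Vn H2 s = M' s + int (post N' u' s) + pre_ms N' (cnt Vn') s
       + (init_m N s - init_m N' s) + eff N H2 s - pre_ms N (cnt Vn) s" by (simp add: Mx_def)
    moreover have "M s = M' s + pre_ms N' (cnt U') s + (init_m N s - init_m N' s) + eff N H s - pre_ms N (cnt U) s"
      using H(4) by (simp add: Mx_def)
    ultimately show "M s + int (post N u s) = Mx (\<lambda>s. M' s + int (post N' u' s)) Vn' Vn H2 s"
      using pU[of s] pU'[of s] e1[of s] e2[of s] by linarith
  qed
  have m1: "mset_over (\<lambda>s. M' s + int (post N' u' s)) (places N')"
    using mset_plus_post[OF wfN' a(4)] .
  have m2: "mset_over (\<lambda>s. M s + int (post N u s)) (places N)"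
    using mset_plus_post[OF wfN a(6)] .
  have f1: "fires N' (\<lambda>s. M' s + pre_ms N' (cnt U') s) (one u')
       (\<lambda>s. M' s + int (post N' u' s) + pre_ms N' (cnt Vn') s)"
    unfolding fires_one
  proof (intro conjI allI ext)
    show "u' \<in> trans N'" by (fact ut')
    fix s
    have "0 \<le> M' s" using a(4) by (simp add: mset_over_def)
    then show "int (pre N' u' s) \<le> M' s + pre_ms N' (cnt U') s" using pU'[of s] pre_cnt_nonneg[of N' Vn' s] by linarith
    show "M' s + int (post N' u' s) + pre_ms N' (cnt Vn') s = M' s + pre_ms N' (cnt U') s - int (pre N' u' s) + int (post N' u' s)"
      using pU'[of s] by linarith
  qed
  have f2: "fires N (\<lambda>s. M s + pre_ms N (cnt U) s) (one u)
       (\<lambda>s. M s + int (post N u s) + pre_ms N (cnt Vn) s)"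
    unfolding fires_one
  proof (intro conjI allI ext)
    show "u \<in> trans N" by (fact ut)
    fix s
    have "0 \<le> M s" using a(6) by (simp add: mset_over_def)
    then show "int (pre N u s) \<le> M s + pre_ms N (cnt U) s" using pU[of s] pre_cnt_nonneg[of N Vn s] by linarith
    show "M s + int (post N u s) + pre_ms N (cnt Vn) s = M s + pre_ms N (cnt U) s - int (pre N u s) + int (post N u s)"
      using pU[of s] by linarith
  qed
  have r1: "(\<lambda>s. M' s + int (post N' u' s) + pre_ms N' (cnt Vn') s) \<in> reach N'"
    using a(5) f1 by (rule reach_step)
  have r2: "(\<lambda>s. M s + int (post N u s) + pre_ms N (cnt Vn) s) \<in> reach N"
    using a(7) f2 by (rule reach_step)
  have la: "list_all2 (\<lambda>t t'. lab N t = lab N' t') Vn Vn'"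
    unfolding Vn_def Vn'_def by (rule list_all2_appendI[OF list_all2_takeI[OF a(1)] list_all2_dropI[OF a(1)]])
  have s1: "set Vn \<subseteq> trans N" 
  proof -
    have "set Vn \<subseteq> set U" unfolding Vn_def set_append using set_take_subset set_drop_subset by (rule Un_least)
    then show ?thesis using a(2) by (rule order_trans)
  qed
  have s2: "set Vn' \<subseteq> trans N'" 
  proof -
    have "set Vn' \<subseteq> set U'" unfolding Vn'_def set_append using set_take_subset set_drop_subset by (rule Un_least)
    then show ?thesis using a(3) by (rule order_trans)
  qed
  have ex: "\<exists>H\<in>NF. fin H \<and> lab_empty N H \<and> (\<lambda>s. M s + int (post N u s)) = Mx (\<lambda>s. M' s + int (post N' u' s)) Vn' Vn H"
    using H2(1-3) mx by blast
  show "Bm (\<lambda>s. M s + int (post N (U!n) s), take n U @ drop (Suc n) U)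
        (\<lambda>s. M' s + int (post N' (U'!n) s), take n U' @ drop (Suc n) U')"
    unfolding Bm_def' u_def[symmetric] u'_def[symmetric] Vn_def[symmetric] Vn'_def[symmetric]
    by (intro conjI la s1 s2 m1 m2 r1 r2 ex)
qed

end



context ctx begin

lemma Bm_tau:
  assumes B: "Bm (M,U) (M',U')" and l: "lab N t = None" and fi: "fires N M (one t) M2"
  shows "Bm (M2,U) (M',U')"
proof -
  from B have a: "list_all2 (\<lambda>t t'. lab N t = lab N' t') U U'" "set U \<subseteq> trans N" "set U' \<subseteq> trans N'"
    "mset_over M' (places N')" "(\<lambda>s. M' s + pre_ms N' (cnt U') s) \<in> reach N'"
    "mset_over M (places N)" "(\<lambda>s. M s + pre_ms N (cnt U) s) \<in> reach N"
    and "\<exists>H\<in>NF. fin H \<and> lab_empty N H \<and> M = Mx M' U' U H"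
    by (auto simp: Bm_def')
  then obtain H where H: "H \<in> NF" "fin H" "lab_empty N H" "M = Mx M' U' U H" by blast
  have t: "t \<in> trans N" and M2: "M2 = (\<lambda>s. M s - int (pre N t s) + int (post N t s))"
    using fi by (auto simp: fires_one)
  have sH: "signed_over H (trans N)" using NF_sub H(1) by blast
  have "fin (\<lambda>x. H x + one t x) \<and> signed_over (\<lambda>x. H x + one t x) (trans N) \<and> lab_empty N (\<lambda>x. H x + one t x)"
    using H sH t l by (simp add: fin_add signed_add signed_one lab_empty_add lab_empty_one)
  then obtain H2 where H2: "H2 \<in> NF" "fin H2" "lab_empty N H2" "eff N H2 = eff N (\<lambda>x. H x + one t x)"
    using h4f by blast
  have mx: "M2 = Mx M' U' U H2"
  proof -
    have "Mx M' U' U H2 = Mx M' U' U (\<lambda>x. H x + one t x)" by (rule Mx_eff_cong[OF H2(4)])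
    also have "\<dots> = (\<lambda>s. Mx M' U' U H s + eff N (one t) s)" using H(2) by (simp add: Mx_add)
    also have "\<dots> = M2" unfolding M2 H(4) by (simp add: eff_one fun_eq_iff)
    finally show ?thesis by simp
  qed
  have m: "mset_over M2 (places N)" by (rule mset_over_fire[OF wfN a(6) fi])
  have "fires N (\<lambda>s. M s + pre_ms N (cnt U) s) (one t) (\<lambda>s. M2 s + pre_ms N (cnt U) s)"
    by (rule fires_shift[OF fi]) (simp add: pre_cnt_nonneg)
  then have r: "(\<lambda>s. M2 s + pre_ms N (cnt U) s) \<in> reach N" by (rule reach_step[OF a(7)])
  have ex: "\<exists>H\<in>NF. fin H \<and> lab_empty N H \<and> M2 = Mx M' U' U H" using H2(1-3) mx by blast
  show ?thesis unfolding Bm_def' by (intro conjI a(1-5) m r ex)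
qed

lemma Bm_init: "Bm (init_m N, []) (init_m N', [])"
proof -
  have m1: "mset_over (init_m N') (places N')"
    using wfN' unfolding mset_over_def supp_def init_m_def wf_net_def by auto
  have m2: "mset_over (init_m N) (places N)"
    using wfN unfolding mset_over_def supp_def init_m_def wf_net_def by auto
  have p0: "pre_ms N (cnt []) s = 0" "pre_ms N' (cnt []) s = 0" for s by (simp_all add: pre_cnt)
  have r1: "(\<lambda>s. init_m N' s + pre_ms N' (cnt []) s) \<in> reach N'" using reach_init[of N'] by (simp add: p0)
  have r2: "(\<lambda>s. init_m N s + pre_ms N (cnt []) s) \<in> reach N" using reach_init[of N] by (simp add: p0)
  have "fin (\<lambda>x. 0::int) \<and> signed_over (\<lambda>x. 0::int) (trans N) \<and> lab_empty N (\<lambda>x. 0::int)"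
    by (simp add: signed_over_def lab_empty_def labm_def)
  then obtain H where H: "H \<in> NF" "fin H" "lab_empty N H" "eff N H = eff N (\<lambda>x. 0)"
    using h4f by blast
  have "init_m N = Mx (init_m N') [] [] H"
    using H(4) by (simp add: Mx_def p0 fun_eq_iff)
  then have ex: "\<exists>H\<in>NF. fin H \<and> lab_empty N H \<and> init_m N = Mx (init_m N') [] [] H" using H by blast
  show ?thesis unfolding Bm_def' by (intro conjI m1 m2 r1 r2 ex) simp_all
qed

lemma tau_cases:
  assumes "st_step N (M,U) Tau p'"
  obtains t M2 where "p' = (M2, U)" "lab N t = None" "fires N M (one t) M2"
  using assms by (cases rule: st_step.cases) auto

lemma G_facts:
  assumes tr: "\<forall>i. tr i \<in> trans N \<and> lab N (tr i) = None"
  shows "fin (\<lambda>x. \<Sum>i<k. one (tr i) x) \<and> lab_empty N (\<lambda>x. \<Sum>i<k. one (tr i) x) \<and>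
     signed_over (\<lambda>x. \<Sum>i<k. one (tr i) x) (trans N) \<and>
     int k \<le> lin (\<lambda>t. int (f t)) (\<lambda>x. \<Sum>i<k. one (tr i) x)"
proof (induction k)
  case 0
  then show ?case by (simp add: signed_over_def lab_empty_def labm_def)
next
  case (Suc k)
  let ?G = "\<lambda>x. \<Sum>i<k. one (tr i) x"
  have eq: "(\<lambda>x. \<Sum>i<Suc k. one (tr i) x) = (\<lambda>x. ?G x + one (tr k) x)" by simp
  have fp: "0 < f (tr k)" using f_pos tr by blast
  show ?case unfolding eq using Suc tr fp
    by (simp add: fin_add lab_empty_add lab_empty_one signed_add signed_one lin_add)
qed

lemma no_div:
  assumes B0: "Bm (ps 0) q" and all: "\<forall>i. st_step N (ps i) Tau (ps (Suc i)) \<and> Bm (ps i) q"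
  shows False
proof -
  obtain M0 U where p0: "ps 0 = (M0, U)" by fastforce
  obtain M' U' where q: "q = (M', U')" by fastforce
  have "\<forall>i. \<exists>t. lab N t = None \<and> fires N (fst (ps i)) (one t) (fst (ps (Suc i))) \<and> snd (ps (Suc i)) = snd (ps i)"
  proof
    fix i
    obtain Mi Ui where pi: "ps i = (Mi, Ui)" by fastforce
    have "st_step N (Mi,Ui) Tau (ps (Suc i))" using all pi by metis
    then obtain t M2 where "ps (Suc i) = (M2, Ui)" "lab N t = None" "fires N Mi (one t) M2"
      by (rule tau_cases)
    then show "\<exists>t. lab N t = None \<and> fires N (fst (ps i)) (one t) (fst (ps (Suc i))) \<and> snd (ps (Suc i)) = snd (ps i)"
      using pi by auto
  qed
  then obtain tr where tr: "\<And>i. lab N (tr i) = None \<and> fires N (fst (ps i)) (one (tr i)) (fst (ps (Suc i))) \<and> snd (ps (Suc i)) = snd (ps i)"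
    by metis
  have trN: "\<forall>i. tr i \<in> trans N \<and> lab N (tr i) = None" using tr by (auto simp: fires_one)
  define G where "G k = (\<lambda>x. \<Sum>i<k. one (tr i) x)" for k
  have Gf: "fin (G k) \<and> lab_empty N (G k) \<and> signed_over (G k) (trans N) \<and> int k \<le> lin (\<lambda>t. int (f t)) (G k)" for k
    unfolding G_def by (rule G_facts[OF trN])
  have sU: "snd (ps k) = U" for k
    by (induction k) (use p0 tr in auto)
  have mk: "fst (ps k) = (\<lambda>s. M0 s + eff N (G k) s)" for k
  proof (induction k)
    case 0 then show ?case using p0 by (simp add: G_def)
  next
    case (Suc k)
    have eq: "G (Suc k) = (\<lambda>x. G k x + one (tr k) x)" by (simp add: G_def)
    have "fst (ps (Suc k)) = (\<lambda>s. fst (ps k) s - int (pre N (tr k) s) + int (post N (tr k) s))"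
      using tr[of k] by (simp add: fires_one)
    then show ?case unfolding eq using Suc Gf[of k] by (simp add: eff_add eff_one fun_eq_iff)
  qed
  have B0': "Bm (M0,U) (M',U')" using B0 p0 q by simp
  then obtain H0 where H0: "H0 \<in> NF" "fin H0" "lab_empty N H0" "M0 = Mx M' U' U H0"
    by (auto simp: Bm_def')
  obtain HMU where HMU: "fin HMU" "mset_over HMU Tp" "lab_empty N HMU"
    "\<And>H. H \<in> NF \<Longrightarrow> fin H \<Longrightarrow> mset_over (Mx M' U' U H) (places N) \<Longrightarrow>
       (\<lambda>s. Mx M' U' U H s + pre_ms N (cnt U) s) \<in> reach N \<Longrightarrow> good HMU M' U' U H"
    using h5_use[OF B0'] by blast
  let ?c = "\<lambda>t. int (f t)"
  have bound: "lin ?c H0 + int k \<le> lin ?c HMU" for k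
  proof -
    have sH0: "signed_over H0 (trans N)" using NF_sub H0(1) by blast
    have "fin (\<lambda>x. H0 x + G k x) \<and> signed_over (\<lambda>x. H0 x + G k x) (trans N) \<and> lab_empty N (\<lambda>x. H0 x + G k x)"
      using H0 sH0 Gf[of k] by (simp add: fin_add signed_add lab_empty_add)
    then obtain Hs where Hs: "Hs \<in> NF" "fin Hs" "lab_empty N Hs" "eff N Hs = eff N (\<lambda>x. H0 x + G k x)"
       "(\<Sum>t\<in>supp Hs. Hs t * int (f t)) = (\<Sum>t\<in>supp (\<lambda>x. H0 x + G k x). (H0 t + G k t) * int (f t))"
      using h4f by blast
    have mxk: "Mx M' U' U Hs = fst (ps k)"
    proof -
      have "Mx M' U' U Hs = Mx M' U' U (\<lambda>x. H0 x + G k x)" by (rule Mx_eff_cong[OF Hs(4)])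
      also have "\<dots> = (\<lambda>s. Mx M' U' U H0 s + eff N (G k) s)" using H0(2) Gf[of k] by (simp add: Mx_add)
      also have "\<dots> = fst (ps k)" using mk[of k] H0(4) by simp
      finally show ?thesis .
    qed
    have Bk: "Bm (fst (ps k), U) (M', U')" using all sU[of k] q by (metis prod.collapse)
    then have "mset_over (fst (ps k)) (places N)" "(\<lambda>s. fst (ps k) s + pre_ms N (cnt U) s) \<in> reach N"
      by (auto simp: Bm_def')
    then have "good HMU M' U' U Hs" using HMU(4)[OF Hs(1,2)] mxk by simp
    then have le: "\<forall>t. Hs t \<le> HMU t" by (simp add: good_def)
    have "lin ?c Hs \<le> lin ?c HMU" by (rule lin_mono[OF Hs(2) HMU(1) le]) simp
    moreover have "lin ?c Hs = lin ?c H0 + lin ?c (G k)"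
      using Hs(5) H0(2) Gf[of k] by (simp add: lin_def[symmetric] lin_add)
    ultimately show ?thesis using Gf[of k] by linarith
  qed
  show False using bound[of "nat (lin ?c HMU - lin ?c H0) + 1"] by linarith
qed

end



lemma post_le_neg: "fin H \<Longrightarrow> (\<forall>u. 0 < H u \<longrightarrow> post N u q = 0) \<Longrightarrow> post_ms N H q \<le> 0"
  unfolding post_ms_def
proof (rule sum_nonpos)
  fix u assume "\<forall>u. 0 < H u \<longrightarrow> post N u q = 0"
  then show "H u * int (post N u q) \<le> 0"
    by (cases "0 < H u") (auto simp: mult_nonpos_nonneg)
qed

lemma post_le_one: "fin H \<Longrightarrow> (\<forall>u. 0 < H u \<longrightarrow> u \<noteq> w \<longrightarrow> post N u q = 0) \<Longrightarrow> post N w q \<le> 1 \<Longrightarrow>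
   post_ms N H q \<le> max 0 (H w)"
proof -
  assume a: "fin H" "\<forall>u. 0 < H u \<longrightarrow> u \<noteq> w \<longrightarrow> post N u q = 0" "post N w q \<le> 1"
  have "post_ms N H q = (\<Sum>u\<in>supp H. H u * int (post N u q))" by (simp add: post_ms_def)
  also have "\<dots> \<le> (\<Sum>u\<in>supp H. (if u = w then max 0 (H w) else 0))"
  proof (rule sum_mono)
    fix u assume "u \<in> supp H"
    show "H u * int (post N u q) \<le> (if u = w then max 0 (H w) else 0)"
    proof (cases "u = w")
      case True
      have "post N w q = 0 \<or> post N w q = 1" using a(3) by auto
      then show ?thesis using True by auto
    next
      case False
      then show ?thesis using a(2) by (cases "0 < H u") (auto simp: mult_nonpos_nonneg)
    qed
  qed
  also have "\<dots> = (if w \<in> supp H then max 0 (H w) else 0)"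
    using a(1) by (simp add: fin_def)
  also have "\<dots> \<le> max 0 (H w)" by simp
  finally show ?thesis .
qed

lemma pre_ge0: "(\<forall>u. H u < 0 \<longrightarrow> pre N u q = 0) \<Longrightarrow> 0 \<le> pre_ms N H q"
  unfolding pre_ms_def
proof (rule sum_nonneg)
  fix u assume "\<forall>u. H u < 0 \<longrightarrow> pre N u q = 0"
  then show "0 \<le> H u * int (pre N u q)" by (cases "H u < 0") auto
qed

lemma pre_ge: "fin H \<Longrightarrow> (\<forall>u. H u < 0 \<longrightarrow> pre N u q = 0) \<Longrightarrow> 0 < H x \<Longrightarrow> H x * int (pre N x q) \<le> pre_ms N H q"
  unfolding pre_ms_def
proof (rule member_le_sum)
  assume "fin H" "\<forall>u. H u < 0 \<longrightarrow> pre N u q = 0" "0 < H x"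
  then show "x \<in> supp H" "finite (supp H)" by (auto simp: supp_def fin_def)
  fix u assume "u \<in> supp H - {x}"
  show "0 \<le> H u * int (pre N u q)" using \<open>\<forall>u. H u < 0 \<longrightarrow> pre N u q = 0\<close> by (cases "H u < 0") auto
qed

lemma fp_Sp: "faithful_place N Tp Sp s \<Longrightarrow> s \<in> Sp \<Longrightarrow> u \<in> Tp \<Longrightarrow> post N u s = 0"
proof (rule ccontr)
  assume a: "faithful_place N Tp Sp s" "s \<in> Sp" "u \<in> Tp" "post N u s \<noteq> 0"
  let ?A = "{t \<in> Tp. 0 < post N t s}"
  have f: "finite ?A" and e: "(\<Sum>t\<in>?A. post N t s) = 0" using a(1,2) by (auto simp: faithful_place_def)
  have uA: "u \<in> ?A" using a by auto
  have "post N u s \<le> (\<Sum>t\<in>?A. post N t s)" by (rule member_le_sum[OF uA _ f]) simp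
  then show False using e a(4) by simp
qed

lemma fp_in:
  assumes a: "faithful_place N Tp Sp q" "w \<in> Tp" "0 < post N w q"
  shows "q \<notin> Sp" "post N w q = 1" "\<forall>u. u \<in> Tp \<longrightarrow> u \<noteq> w \<longrightarrow> post N u q = 0"
proof -
  have f: "finite ({t \<in> Tp. 0 < post N t q})" and e: "(if q \<in> Sp then 1 else 0) + (\<Sum>t\<in>{t \<in> Tp. 0 < post N t q}. post N t q) = 1"
    using a(1) by (auto simp: faithful_place_def)
  have wA: "w \<in> {t \<in> Tp. 0 < post N t q}" using a by auto
  have split: "(\<Sum>t\<in>{t \<in> Tp. 0 < post N t q}. post N t q) = post N w q + (\<Sum>t\<in>{t \<in> Tp. 0 < post N t q} - {w}. post N t q)"
    using f wA by (simp add: sum.remove)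
  show "q \<notin> Sp" using e split a(3) by (auto split: if_splits)
  then have e2: "post N w q + (\<Sum>t\<in>{t \<in> Tp. 0 < post N t q} - {w}. post N t q) = 1" using e split by simp
  then show "post N w q = 1" using a(3) by linarith
  show "\<forall>u. u \<in> Tp \<longrightarrow> u \<noteq> w \<longrightarrow> post N u q = 0"
  proof (intro allI impI; rule ccontr)
    fix u assume u: "u \<in> Tp" "u \<noteq> w" "post N u q \<noteq> 0"
    then have "u \<in> {t \<in> Tp. 0 < post N t q} - {w}" by auto
    then have "post N u q \<le> (\<Sum>t\<in>{t \<in> Tp. 0 < post N t q} - {w}. post N t q)" using f by (intro member_le_sum) auto
    then show False using e2 a(3) u(3) by linarith
  qed
qed

lemma path_claim:
  assumes fH: "fin H" and posTp: "\<forall>x. 0 < H x \<longrightarrow> x \<in> Tp"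
   and e: "\<forall>u v. H u < 0 \<and> 0 < H v \<longrightarrow> disjoint_ms (pre N u) (pre N v)"
   and ft: "\<forall>u. H u < 0 \<longrightarrow> disjoint_ms (pre N u) (pre N t)"
   and Mt: "\<forall>s. int (pre N t s) \<le> M s" and Mnn: "\<forall>s. 0 \<le> M s"
   and Mq: "\<forall>q. q \<notin> Sp \<longrightarrow> M q = post_ms N H q - pre_ms N H q - X q" and Xnn: "\<forall>q. 0 \<le> X q"
  shows "faithful_path N Tp Sp zs \<Longrightarrow> hd zs = P q \<Longrightarrow> last zs = Tr t \<Longrightarrow>
     int (path_weight N zs) \<le> M q + pre_ms N H q \<and> (\<forall>u. H u < 0 \<longrightarrow> pre N u q = 0)"
proof (induction "length zs" arbitrary: zs q rule: less_induct)
  case less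
  note fp = less.prems(1) and hd = less.prems(2) and lst = less.prems(3)
  obtain rest where zs: "zs = P q # rest" using hd fp
    by (cases zs) (auto simp: faithful_path_def is_path_def)
  obtain y rest2 where rest: "rest = y # rest2" using lst zs by (cases rest) auto
  have arc1: "0 < arcw N (P q) y" using fp zs rest by (simp add: faithful_path_Cons2)
  obtain w where y: "y = Tr w" using arc1 by (cases y) auto
  have fpq: "faithful_place N Tp Sp q" using fp zs rest by (simp add: faithful_path_Cons2)
  have prew: "0 < pre N w q" using arc1 y by simp
  show ?case
  proof (cases rest2)
    case Nil
    then have wt: "w = t" using lst zs rest y by simp
    have W: "path_weight N zs = pre N t q" using zs rest y Nil wt
      by (simp add: path_weight_Cons2 path_weight_def)
    have dis: "\<forall>u. H u < 0 \<longrightarrow> pre N u q = 0"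
    proof (intro allI impI)
      fix u assume "H u < 0"
      then have "disjoint_ms (pre N u) (pre N t)" using ft by blast
      then show "pre N u q = 0" using prew wt unfolding disjoint_ms_def by (metis min_def not_gr0 order.strict_iff_not)
    qed
    have "0 \<le> pre_ms N H q" using dis by (rule pre_ge0)
    then show ?thesis using W Mt dis by (smt (verit))
  next
    case (Cons z rest3)
    have fp2: "faithful_path N Tp Sp (Tr w # z # rest3)" using fp zs rest y Cons by (simp add: faithful_path_Cons2)
    have arc2: "0 < arcw N (Tr w) z" and wTp: "w \<in> Tp" using fp2 by (auto simp: faithful_path_Cons2)
    obtain q2 where z: "z = P q2" using arc2 by (cases z) auto
    have postw: "0 < post N w q2" using arc2 z by simp
    have fp3: "faithful_path N Tp Sp (P q2 # rest3)" using fp2 z by (simp add: faithful_path_Cons2)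
    have lst3: "last (P q2 # rest3) = Tr t" using lst zs rest Cons z by simp
    have "length (P q2 # rest3) < length zs" using zs rest Cons z by simp
    then have IH: "int (path_weight N (P q2 # rest3)) \<le> M q2 + pre_ms N H q2"
      using less.hyps fp3 lst3 by fastforce
    obtain v rest4 where r3: "rest3 = v # rest4" using lst3 by (cases rest3) auto
    have fpq2: "faithful_place N Tp Sp q2" using fp3 r3 by (simp add: faithful_path_Cons2)
    note fi = fp_in[OF fpq2 wTp postw]
    have post_le: "post_ms N H q2 \<le> max 0 (H w)"
    proof (rule post_le_one[OF fH])
      show "\<forall>u. 0 < H u \<longrightarrow> u \<noteq> w \<longrightarrow> post N u q2 = 0" using fi(3) posTp by blast
      show "post N w q2 \<le> 1" using fi(2) by simp
    qed
    have Mq2: "M q2 = post_ms N H q2 - pre_ms N H q2 - X q2" using Mq fi(1) by blast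
    have Wpos: "0 < path_weight N (P q2 # rest3)" using fp3 by (intro path_weight_pos) (simp add: faithful_path_def)
    have W2: "int (path_weight N (P q2 # rest3)) \<le> max 0 (H w)" using IH Mq2 post_le Xnn[rule_format, of q2] by linarith
    then have Hw: "0 < H w" "int (path_weight N (P q2 # rest3)) \<le> H w" using Wpos by linarith+
    have dis: "\<forall>u. H u < 0 \<longrightarrow> pre N u q = 0"
    proof (intro allI impI)
      fix u assume "H u < 0"
      then have "disjoint_ms (pre N u) (pre N w)" using e Hw(1) by blast
      then show "pre N u q = 0" using prew unfolding disjoint_ms_def by (metis min_def not_gr0 order.strict_iff_not)
    qed
    have W: "path_weight N zs = pre N w q * path_weight N (P q2 # rest3)"
      using zs rest y Cons z fi(2) by (simp add: path_weight_Cons2)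
    have "int (path_weight N zs) = int (pre N w q) * int (path_weight N (P q2 # rest3))" using W by simp
    also have "\<dots> \<le> int (pre N w q) * H w" using Hw(2) by (intro mult_left_mono) auto
    also have "\<dots> = H w * int (pre N w q)" by simp
    also have "\<dots> \<le> pre_ms N H q" by (rule pre_ge[OF fH dis Hw(1)])
    also have "\<dots> \<le> M q + pre_ms N H q" using Mnn by (simp add: add_increasing)
    finally show ?thesis using dis by simp
  qed
qed


context ctx begin

abbreviation Sp where "Sp \<equiv> places N' \<union> {s \<in> places N. 0 < init N s}"

lemma Bm_good:
  assumes B: "Bm (M,U) (M',U')"
  obtains H HMU where "H \<in> NF" "fin H" "lab_empty N H" "M = Mx M' U' U H"
    "fin HMU" "mset_over HMU Tp" "lab_empty N HMU" "good HMU M' U' U H"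
    "\<And>H. H \<in> NF \<Longrightarrow> fin H \<Longrightarrow> mset_over (Mx M' U' U H) (places N) \<Longrightarrow>
       (\<lambda>s. Mx M' U' U H s + pre_ms N (cnt U) s) \<in> reach N \<Longrightarrow> good HMU M' U' U H"
proof -
  from B have a: "mset_over M (places N)" "(\<lambda>s. M s + pre_ms N (cnt U) s) \<in> reach N"
    and "\<exists>H\<in>NF. fin H \<and> lab_empty N H \<and> M = Mx M' U' U H"
    by (auto simp: Bm_def')
  then obtain H where H: "H \<in> NF" "fin H" "lab_empty N H" "M = Mx M' U' U H" by blast
  obtain HMU where HMU: "fin HMU" "mset_over HMU Tp" "lab_empty N HMU"
    "\<And>H. H \<in> NF \<Longrightarrow> fin H \<Longrightarrow> mset_over (Mx M' U' U H) (places N) \<Longrightarrow>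
       (\<lambda>s. Mx M' U' U H s + pre_ms N (cnt U) s) \<in> reach N \<Longrightarrow> good HMU M' U' U H"
    using h5_use[OF B] by blast
  have "good HMU M' U' U H" using HMU(4)[OF H(1,2)] a H(4) by simp
  then show ?thesis using that H HMU by blast
qed

lemma startA_enabled:
  assumes B: "Bm (M,U) (M',U')" and t: "t \<in> trans N" and vis: "lab N t \<noteq> None"
    and Mt: "\<forall>s. int (pre N t s) \<le> M s"
    and t': "t' \<in> trans N'" "lab N' t' = lab N t"
    and orig: "\<forall>s. enat (pre N' t' s) \<le> origins N Tp Sp (Tr t) s"
  shows "\<forall>s. int (pre N' t' s) \<le> M' s"
proof
  fix s
  from B have a: "list_all2 (\<lambda>t t'. lab N t = lab N' t') U U'" "set U \<subseteq> trans N" "set U' \<subseteq> trans N'"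
    "mset_over M' (places N')" "mset_over M (places N)"
    by (auto simp: Bm_def')
  obtain H HMU where H: "H \<in> NF" "fin H" "lab_empty N H" "M = Mx M' U' U H"
    and HMU: "fin HMU" "mset_over HMU Tp" "lab_empty N HMU" and g: "good HMU M' U' U H"
    using Bm_good[OF B] by metis
  have MU: "(\<lambda>s. Mx M' U' U H s + pre_ms N (cnt U) s) = (\<lambda>s. M s + pre_ms N (cnt U) s)" using H(4) by simp
  note gd = g[unfolded good_def MU]
  have le: "\<forall>x. H x \<le> HMU x" using gd by blast
  have e: "\<forall>u v. H u < 0 \<and> 0 < H v \<longrightarrow> disjoint_ms (pre N u) (pre N v)" using gd by blast
  have ff: "\<forall>u v. H u < 0 \<and> enabled N (\<lambda>s. M s + pre_ms N (cnt U) s) (one v) \<and> lab N v \<noteq> None \<longrightarrow>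
                    disjoint_ms (pre N u) (pre N v)" using gd by blast
  have gg: "\<forall>t u t' u'. enabled N (\<lambda>s. M s + pre_ms N (cnt U) s) (\<lambda>x. one t x + one u x) \<and>
                    t' \<in> trans N' \<and> u' \<in> trans N' \<and> lab N' t' = lab N t \<and> lab N' u' = lab N u \<longrightarrow>
                    disjoint_ms (pre N' t') (pre N' u')" using gd by blast
  have Mnn: "\<forall>s. 0 \<le> M s" using a(5) by (simp add: mset_over_def)
  have posTp: "\<forall>x. 0 < H x \<longrightarrow> x \<in> Tp"
  proof (intro allI impI)
    fix x assume "0 < H x"
    then have "HMU x \<noteq> 0" using le by (metis order.strict_iff_not)
    then show "x \<in> Tp" using HMU(2) by (auto simp: mset_over_def supp_def)
  qed
  have enU: "enabled N (\<lambda>s. M s + pre_ms N (cnt U) s) (one t)"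
    unfolding enabled_one using t Mt pre_cnt_nonneg[of N U] by (auto intro: add_increasing2)
  have ft: "\<forall>u. H u < 0 \<longrightarrow> disjoint_ms (pre N u) (pre N t)" using ff enU vis by blast
  have Mq: "\<forall>q. q \<notin> Sp \<longrightarrow> M q = post_ms N H q - pre_ms N H q - pre_ms N (cnt U) q"
  proof (intro allI impI)
    fix q assume q: "q \<notin> Sp"
    then have qN': "q \<notin> places N'" by simp
    have "M' q = 0" using a(4) qN' by (auto simp: mset_over_def supp_def)
    moreover have "pre_ms N' (cnt U') q = 0" using wf_pre[OF wfN' qN'] by (simp add: pre_cnt)
    moreover have "init N' q = 0" using M0' qN' by simp
    moreover have "init N q = 0"
    proof (rule ccontr)
      assume "init N q \<noteq> 0"
      then have "q \<in> places N" using wfN by (auto simp: wf_net_def)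
      then show False using q \<open>init N q \<noteq> 0\<close> by simp
    qed
    ultimately show "M q = post_ms N H q - pre_ms N H q - pre_ms N (cnt U) q"
      using H(4) by (simp add: Mx_def eff_def init_m_def)
  qed
  show "int (pre N' t' s) \<le> M' s"
  proof (cases "pre N' t' s = 0")
    case True then show ?thesis using a(4) by (simp add: mset_over_def)
  next
    case False
    then have sN': "s \<in> places N'" using wfN' by (auto simp: wf_net_def)
    define S where "S = {enat (path_weight N xs) | xs. faithful_path N Tp Sp xs \<and> hd xs = P s \<and> last xs = Tr t}"
    have "enat (pre N' t' s) \<le> Sup S" using orig[rule_format, of s] sN' by (simp add: origins_def S_def)
    then have "enat (pre N' t' s - 1) < Sup S" using False
      by (metis Suc_diff_1 Suc_ile_eq not_gr0)
    then obtain x where "x \<in> S" "enat (pre N' t' s - 1) < x" by (auto simp: less_Sup_iff)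
    then obtain zs where zs: "faithful_path N Tp Sp zs" "hd zs = P s" "last zs = Tr t"
      and lt: "enat (pre N' t' s - 1) < enat (path_weight N zs)" by (auto simp: S_def)
    have kW: "pre N' t' s \<le> path_weight N zs" using lt False by simp
    have claim: "int (path_weight N zs) \<le> M s + pre_ms N H s"
    proof -
      have Xnn: "\<forall>q. 0 \<le> pre_ms N (cnt U) q" by (simp add: pre_cnt_nonneg)
      show ?thesis using path_claim[OF H(2) posTp e ft Mt Mnn Mq Xnn zs] by blast
    qed
    obtain rest where zs2: "zs = P s # rest" using zs by (cases zs) (auto simp: faithful_path_def is_path_def)
    obtain y rest2 where rest: "rest = y # rest2" using zs(3) zs2 by (cases rest) auto
    have fps: "faithful_place N Tp Sp s" using zs(1) zs2 rest by (simp add: faithful_path_Cons2)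
    have postH: "post_ms N H s \<le> 0"
    proof (rule post_le_neg[OF H(2)])
      show "\<forall>u. 0 < H u \<longrightarrow> post N u s = 0" using posTp fp_Sp[OF fps] sN' by blast
    qed
    have preU': "pre_ms N' (cnt U') s = 0"
    proof -
      have "pre N' u' s = 0" if u': "u' \<in> set U'" for u'
      proof -
        obtain i where i: "i < length U'" "U' ! i = u'" using u' by (meson in_set_conv_nth)
        have len: "length U = length U'" using a(1) by (rule list_all2_lengthD)
        define u where "u = U ! i"
        have uU: "u \<in> set U" using i len by (simp add: u_def)
        have lu: "lab N u = lab N' u'" using list_all2_nthD[OF a(1), of i] i len by (simp add: u_def)
        have en2: "enabled N (\<lambda>s. M s + pre_ms N (cnt U) s) (\<lambda>x. one t x + one u x)"
        proof (rule enabled_two[OF t])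
          show "u \<in> trans N" using uU a(2) by auto
          show "\<forall>s. int (pre N t s) + int (pre N u s) \<le> M s + pre_ms N (cnt U) s"
          proof
            fix s show "int (pre N t s) + int (pre N u s) \<le> M s + pre_ms N (cnt U) s"
              using Mt[rule_format, of s] pre_cnt_ge[OF uU, of N s] by linarith
          qed
        qed
        have u'N: "u' \<in> trans N'" using a(3) u' by auto
        have "disjoint_ms (pre N' t') (pre N' u')"
          by (rule gg[rule_format, of t u t' u', OF conjI[OF en2 conjI[OF t'(1) conjI[OF u'N conjI[OF t'(2) lu[symmetric]]]]]])
        then show ?thesis using False unfolding disjoint_ms_def by (metis min_def not_gr0 order.strict_iff_not)
      qed
      note z = this
      have "(\<Sum>t\<leftarrow>U'. int (pre N' t s)) = 0" using z by (induction U') auto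
      then show ?thesis by (simp add: pre_cnt)
    qed
    have D0: "init_m N s - init_m N' s = 0" using M0' sN' by (simp add: init_m_def)
    have "M s = M' s + post_ms N H s - pre_ms N H s - pre_ms N (cnt U) s"
      using H(4) preU' D0 by (simp add: Mx_def eff_def)
    then show ?thesis using claim kW postH pre_cnt_nonneg[of N U s] by linarith
  qed
qed

lemma startA:
  assumes B: "Bm (M,U) (M',U')" and st: "st_step N (M,U) (Start a) p'"
  shows "\<exists>q'. st_step N' (M',U') (Start a) q' \<and> Bm p' q'"
proof -
  from st obtain t where t: "lab N t = Some a" "enabled N M (one t)" and p': "p' = (\<lambda>s. M s - int (pre N t s), U @ [t])"
    by (cases rule: st_step.cases) auto
  have tN: "t \<in> trans N" and Mt: "\<forall>s. int (pre N t s) \<le> M s" using t(2) by (auto simp: enabled_one)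
  have "lab N t \<noteq> None" using t by simp
  with h3 tN obtain t' where t': "t' \<in> trans N'" "lab N' t' = lab N t"
    "\<forall>s. enat (pre N' t' s) \<le> origins N Tp Sp (Tr t) s" by blast
  have M't: "\<forall>s. int (pre N' t' s) \<le> M' s"
    by (rule startA_enabled[OF B tN _ Mt t'(1,2,3)]) (use t in simp)
  have "st_step N' (M',U') (Start a) (\<lambda>s. M' s - int (pre N' t' s), U' @ [t'])"
    by (rule st_start) (use t t' M't in \<open>auto simp: enabled_one\<close>)
  moreover have "Bm p' (\<lambda>s. M' s - int (pre N' t' s), U' @ [t'])"
    unfolding p' by (rule Bm_start[OF B tN t'(1) t'(2)[symmetric] Mt M't])
  ultimately show ?thesis by blast
qed

end



abbreviation tstar :: "('s, 't, 'a) pnet \<Rightarrow> ('s, 't) st_marking \<Rightarrow> ('s, 't) st_marking \<Rightarrow> bool" where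
  "tstar N \<equiv> (\<lambda>x y. st_step N x Tau y)\<^sup>*\<^sup>*"

lemma tau_step_cases:
  assumes "st_step N p Tau p2"
  obtains t M2 where "p2 = (M2, snd p)" "lab N t = None" "fires N (fst p) (one t) M2"
  using assms by (cases rule: st_step.cases) auto

lemma tau_star_inv:
  assumes "tstar N p p2"
  shows "snd p2 = snd p \<and> ((\<forall>s. 0 \<le> fst p s) \<longrightarrow> (\<forall>s. 0 \<le> fst p2 s)) \<and>
    ((\<lambda>s. fst p s + pre_ms N (cnt (snd p)) s) \<in> reach N \<longrightarrow> (\<lambda>s. fst p2 s + pre_ms N (cnt (snd p)) s) \<in> reach N)"
  using assms
proof (induction rule: rtranclp_induct)
  case base then show ?case by simp
next
  case (step y z)
  obtain t M2 where z: "z = (M2, snd y)" "lab N t = None" "fires N (fst y) (one t) M2"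
    using step(2) by (rule tau_step_cases)
  have nn: "(\<forall>s. 0 \<le> fst y s) \<longrightarrow> (\<forall>s. 0 \<le> M2 s)"
    using z(3) unfolding fires_one by (smt (verit) of_nat_0_le_iff)
  have "fires N (\<lambda>s. fst y s + pre_ms N (cnt (snd p)) s) (one t) (\<lambda>s. M2 s + pre_ms N (cnt (snd p)) s)"
    by (rule fires_shift[OF z(3)]) (simp add: pre_cnt_nonneg)
  then have r: "(\<lambda>s. fst y s + pre_ms N (cnt (snd p)) s) \<in> reach N \<Longrightarrow> (\<lambda>s. M2 s + pre_ms N (cnt (snd p)) s) \<in> reach N"
    by (rule reach_step[rotated])
  show ?case using step(3) z(1) nn r by auto
qed

lemma fire_phase2:
  assumes wf: "wf_net N" and ac: "acyclic_on N X" and XT: "X \<subseteq> trans N"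
  shows "fin K \<Longrightarrow> (\<forall>x. 0 \<le> K x) \<Longrightarrow> supp K \<subseteq> X \<Longrightarrow> (\<forall>x\<in>supp K. lab N x = None) \<Longrightarrow>
    (\<forall>s. 0 \<le> M s) \<Longrightarrow> (\<forall>s. 0 \<le> M s + eff N K s) \<Longrightarrow> tstar N (M,U) (\<lambda>s. M s + eff N K s, U)"
proof (induction "nat (lin (\<lambda>_. 1) K)" arbitrary: K M rule: less_induct)
  case less
  note fK = less.prems(1) and nnK = less.prems(2) and sK = less.prems(3) and lK = less.prems(4)
    and nnM = less.prems(5) and fin = less.prems(6)
  show ?case
  proof (cases "supp K = {}")
    case True
    then have "K = (\<lambda>x. 0)" by (auto simp: supp_def)
    then show ?thesis by simp
  next
    case False
    have "finite (supp K)" using fK by (simp add: fin_def)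
    then obtain u where u: "u \<in> supp K" and src: "\<forall>v\<in>supp K. \<forall>s. 0 < pre N u s \<longrightarrow> post N v s = 0"
      using acyc_min[OF ac wf sK _ False] by blast
    have Ku: "1 \<le> K u" using u nnK[rule_format, of u] by (auto simp: supp_def)
    have uT: "u \<in> trans N" using u sK XT by auto
    have en: "int (pre N u s) \<le> M s" for s
    proof (cases "pre N u s = 0")
      case True then show ?thesis using nnM by simp
    next
      case False
      have p0: "post_ms N K s = 0" unfolding post_ms_def
        by (rule sum.neutral) (use src False in auto)
      have dis: "\<forall>v. K v < 0 \<longrightarrow> pre N v s = 0" using nnK by (meson not_less)
      have "K u * int (pre N u s) \<le> pre_ms N K s" using pre_ge[OF fK dis] Ku by simp
      moreover have "int (pre N u s) \<le> K u * int (pre N u s)" using Ku by (simp add: mult_le_cancel_right1)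
      moreover have "0 \<le> M s + eff N K s" using fin by blast
      ultimately show ?thesis using p0 by (simp add: eff_def)
    qed
    define M1 where "M1 = (\<lambda>s. M s - int (pre N u s) + int (post N u s))"
    define K1 where "K1 = (\<lambda>x. K x - one u x)"
    have fi: "fires N M (one u) M1" unfolding fires_one M1_def using uT en by auto
    have step: "st_step N (M,U) Tau (M1,U)" using st_tau[OF _ fi] lK u by blast
    have fK1: "fin K1" using fK by (simp add: K1_def fin_diff)
    have nnK1: "\<forall>x. 0 \<le> K1 x" using nnK Ku by (auto simp: K1_def one_def)
    have sK1: "supp K1 \<subseteq> X" using sK u by (auto simp: K1_def supp_def one_def split: if_splits)
    have sK1': "supp K1 \<subseteq> supp K" using u by (auto simp: K1_def supp_def one_def split: if_splits)
    have lK1: "\<forall>x\<in>supp K1. lab N x = None" using lK sK1' by blast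
    have nnM1: "\<forall>s. 0 \<le> M1 s" unfolding M1_def using en by (smt (verit) of_nat_0_le_iff)
    have eq: "(\<lambda>s. M1 s + eff N K1 s) = (\<lambda>s. M s + eff N K s)"
      using fK by (simp add: M1_def K1_def eff_diff eff_one fun_eq_iff)
    have lt: "nat (lin (\<lambda>_. 1) K1) < nat (lin (\<lambda>_. 1) K)"
    proof -
      have "lin (\<lambda>_. 1) K1 = lin (\<lambda>_. 1) K - 1" using fK by (simp add: K1_def lin_diff)
      moreover have "1 \<le> lin (\<lambda>_. 1) K"
      proof -
        have "lin (\<lambda>_. 1) (one u) \<le> lin (\<lambda>_. 1) K"
          by (rule lin_mono[OF fin_one fK]) (use Ku nnK in \<open>auto simp: one_def\<close>)
        then show ?thesis by simp
      qed
      ultimately show ?thesis by linarith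
    qed
    have fin1: "\<forall>s. 0 \<le> M1 s + eff N K1 s"
    proof
      fix s show "0 \<le> M1 s + eff N K1 s" using fin fun_cong[OF eq, of s] by simp
    qed
    have "tstar N (M1,U) (\<lambda>s. M1 s + eff N K1 s, U)"
      by (rule less.hyps[OF lt fK1 nnK1 sK1 lK1 nnM1 fin1])
    then have "tstar N (M1,U) (\<lambda>s. M s + eff N K s, U)" using eq by simp
    with step show ?thesis by (rule converse_rtranclp_into_rtranclp[where r="\<lambda>x y. st_step N x Tau y"])
  qed
qed


lemma sum_list_zero: "(\<forall>x\<in>set xs. g x = (0::int)) \<Longrightarrow> sum_list (map g xs) = 0"
  by (induction xs) auto

lemma disj_zero: "disjoint_ms A B \<Longrightarrow> 0 < A s \<Longrightarrow> B s = 0"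
  unfolding disjoint_ms_def by (metis min_def not_gr0 order.strict_iff_not)

context ctx begin

lemma fire_phase1:
  shows "fin H \<Longrightarrow> (\<forall>x. H x < 0 \<longrightarrow> x \<in> Tm) \<Longrightarrow> (\<forall>x. lab N x \<noteq> None \<longrightarrow> H x = 0) \<Longrightarrow>
  (\<forall>u v. H u < 0 \<and> 0 < H v \<longrightarrow> disjoint_ms (pre N u) (pre N v)) \<Longrightarrow>
  (\<forall>u x. H u < 0 \<longrightarrow> x \<in> set U \<longrightarrow> disjoint_ms (pre N u) (pre N x)) \<Longrightarrow>
  (\<forall>s. 0 \<le> Bs s + pre_ms N (cnt U) s) \<Longrightarrow> (\<forall>s. 0 \<le> Bs s + eff N H s) \<Longrightarrow>
  tstar N (\<lambda>s. Bs s + eff N H s, U) (\<lambda>s. Bs s + eff N (\<lambda>x. max (H x) 0) s, U)"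
proof (induction "nat (lin (\<lambda>_. 1) (\<lambda>x. max (- H x) 0))" arbitrary: H rule: less_induct)
  case less
  note fH = less.prems(1) and negTm = less.prems(2) and vis = less.prems(3) and e = less.prems(4)
    and dU = less.prems(5) and Bnn = less.prems(6) and Mnn = less.prems(7)
  let ?Y = "{x. H x < 0}"
  show ?case
  proof (cases "?Y = {}")
    case True
    have "(\<lambda>x. max (H x) 0) = H"
    proof
      fix x have "\<not> H x < 0" using True by blast
      then show "max (H x) 0 = H x" by simp
    qed
    then show ?thesis by simp
  next
    case False
    have fY: "finite ?Y" using fH unfolding fin_def by (rule finite_subset[rotated]) (auto simp: supp_def)
    have YTm: "?Y \<subseteq> Tm" using negTm by auto
    obtain u where u: "u \<in> ?Y" and src: "\<forall>v\<in>?Y. \<forall>s. 0 < pre N u s \<longrightarrow> post N v s = 0"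
      using acyc_min[OF h2 wfN YTm fY False] by blast
    have Hu: "H u \<le> -1" using u by simp
    have uT: "u \<in> trans N" using u YTm Tm_sub by auto
    have lu: "lab N u = None"
    proof (rule ccontr)
      assume "lab N u \<noteq> None"
      then have "H u = 0" using vis by blast
      then show False using u by simp
    qed
    define M where "M = (\<lambda>s. Bs s + eff N H s)"
    have en: "int (pre N u s) \<le> M s" for s
    proof (cases "pre N u s = 0")
      case True then show ?thesis using Mnn by (simp add: M_def)
    next
      case False
      then have ps: "0 < pre N u s" by simp
      have "pre_ms N (cnt U) s = 0" unfolding pre_cnt
      proof (rule sum_list_zero, rule ballI)
        fix x assume "x \<in> set U"
        then have "disjoint_ms (pre N u) (pre N x)" using dU u by blast
        then show "int (pre N x s) = 0" using disj_zero ps by fastforce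
      qed
      then have B0: "0 \<le> Bs s" using Bnn by (metis add.right_neutral)
      have post0: "0 \<le> post_ms N H s" unfolding post_ms_def
      proof (rule sum_nonneg)
        fix v show "0 \<le> H v * int (post N v s)"
        proof (cases "H v < 0")
          case True then have "post N v s = 0" using src ps by blast
          then show ?thesis by simp
        qed simp
      qed
      have fs: "finite (supp H)" using fH by (simp add: fin_def)
      have uS: "u \<in> supp H" using u by (simp add: supp_def)
      have "pre_ms N H s = H u * int (pre N u s) + (\<Sum>v\<in>supp H - {u}. H v * int (pre N v s))"
        unfolding pre_ms_def using fs uS by (simp add: sum.remove)
      moreover have "(\<Sum>v\<in>supp H - {u}. H v * int (pre N v s)) \<le> 0"
      proof (rule sum_nonpos)
        fix v show "H v * int (pre N v s) \<le> 0"
        proof (cases "0 < H v")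
          case True
          then have "disjoint_ms (pre N u) (pre N v)" using e u by blast
          then have "pre N v s = 0" using disj_zero ps by fastforce
          then show ?thesis by simp
        next
          case False then show ?thesis by (simp add: mult_nonpos_nonneg)
        qed
      qed
      moreover have "H u * int (pre N u s) \<le> (-1) * int (pre N u s)"
        by (rule mult_right_mono[OF Hu]) simp
      ultimately have "pre_ms N H s \<le> - int (pre N u s)" by linarith
      then show ?thesis using B0 post0 by (simp add: M_def eff_def)
    qed
    define M1 where "M1 = (\<lambda>s. M s - int (pre N u s) + int (post N u s))"
    define H1 where "H1 = (\<lambda>x. H x + one u x)"
    have fi: "fires N M (one u) M1" unfolding fires_one M1_def using uT en by auto
    have step: "st_step N (M,U) Tau (M1,U)" by (rule st_tau[OF lu fi])
    have fH1: "fin H1" using fH by (simp add: H1_def fin_add)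
    have M1eq: "M1 = (\<lambda>s. Bs s + eff N H1 s)"
      using fH by (simp add: M1_def M_def H1_def eff_add eff_one fun_eq_iff)
    have H1u: "H1 u \<le> 0" using Hu by (simp add: H1_def one_def)
    have H1o: "x \<noteq> u \<Longrightarrow> H1 x = H x" for x by (simp add: H1_def one_def)
    have neg1: "H1 x < 0 \<Longrightarrow> H x < 0" for x using Hu by (cases "x = u") (auto simp: H1o)
    have pos1: "0 < H1 x \<Longrightarrow> 0 < H x" for x using H1u by (cases "x = u") (auto simp: H1o)
    have negTm1: "\<forall>x. H1 x < 0 \<longrightarrow> x \<in> Tm"
    proof (intro allI impI)
      fix x assume "H1 x < 0" then show "x \<in> Tm" using negTm neg1 by blast
    qed
    have vis1: "\<forall>x. lab N x \<noteq> None \<longrightarrow> H1 x = 0"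
    proof (intro allI impI)
      fix x assume "lab N x \<noteq> None"
      then have "x \<noteq> u" "H x = 0" using lu vis by auto
      then show "H1 x = 0" using H1o by simp
    qed
    have e1: "\<forall>u v. H1 u < 0 \<and> 0 < H1 v \<longrightarrow> disjoint_ms (pre N u) (pre N v)"
    proof (intro allI impI)
      fix a b assume "H1 a < 0 \<and> 0 < H1 b"
      then have "H a < 0" "0 < H b" using neg1 pos1 by auto
      then show "disjoint_ms (pre N a) (pre N b)" using e by blast
    qed
    have dU1: "\<forall>u' x. H1 u' < 0 \<longrightarrow> x \<in> set U \<longrightarrow> disjoint_ms (pre N u') (pre N x)"
    proof (intro allI impI)
      fix a x assume "H1 a < 0" "x \<in> set U"
      then show "disjoint_ms (pre N a) (pre N x)" using dU neg1 by blast
    qed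
    have Mnn1: "\<forall>s. 0 \<le> Bs s + eff N H1 s"
    proof
      fix s have "0 \<le> M1 s" unfolding M1_def using en[of s] by simp
      then show "0 \<le> Bs s + eff N H1 s" using M1eq by simp
    qed
    have mx: "(\<lambda>x. max (H1 x) 0) = (\<lambda>x. max (H x) 0)"
    proof
      fix x show "max (H1 x) 0 = max (H x) 0" using Hu H1u by (cases "x = u") (auto simp: H1o)
    qed
    have lt: "nat (lin (\<lambda>_. 1) (\<lambda>x. max (- H1 x) 0)) < nat (lin (\<lambda>_. 1) (\<lambda>x. max (- H x) 0))"
    proof -
      have fN: "fin (\<lambda>x. max (- H x) 0)" using fH unfolding fin_def
        by (rule finite_subset[rotated]) (auto simp: supp_def)
      have eqn: "(\<lambda>x. max (- H1 x) 0) = (\<lambda>x. max (- H x) 0 - one u x)"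
      proof
        fix x show "max (- H1 x) 0 = max (- H x) 0 - one u x"
          using Hu by (cases "x = u") (auto simp: H1o H1_def one_def)
      qed
      have "lin (\<lambda>_. 1) (\<lambda>x. max (- H1 x) 0) = lin (\<lambda>_. 1) (\<lambda>x. max (- H x) 0) - 1"
        unfolding eqn using fN by (simp add: lin_diff)
      moreover have "1 \<le> lin (\<lambda>_. 1) (\<lambda>x. max (- H x) 0)"
      proof -
        have "lin (\<lambda>_. 1) (one u) \<le> lin (\<lambda>_. 1) (\<lambda>x. max (- H x) 0)"
          by (rule lin_mono[OF fin_one fN]) (use Hu in \<open>auto simp: one_def\<close>)
        then show ?thesis by simp
      qed
      ultimately show ?thesis by linarith
    qed
    have "tstar N (\<lambda>s. Bs s + eff N H1 s, U) (\<lambda>s. Bs s + eff N (\<lambda>x. max (H1 x) 0) s, U)"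
      by (rule less.hyps[OF lt fH1 negTm1 vis1 e1 dU1 Bnn Mnn1])
    then have "tstar N (M1, U) (\<lambda>s. Bs s + eff N (\<lambda>x. max (H x) 0) s, U)" using M1eq mx by simp
    with step have "tstar N (M, U) (\<lambda>s. Bs s + eff N (\<lambda>x. max (H x) 0) s, U)"
      by (rule converse_rtranclp_into_rtranclp[where r="\<lambda>x y. st_step N x Tau y"])
    then show ?thesis by (simp add: M_def)
  qed
qed

end



context ctx begin

lemma startB:
  assumes B: "Bm (M,U) (M',U')" and st: "st_step N' (M',U') (Start a) q'"
  shows "\<exists>p1 p'. tstar N (M,U) p1 \<and> Bm p1 (M',U') \<and> Bm p' q' \<and> st_step N p1 (Start a) p'"
proof -
  from st obtain t' where t': "lab N' t' = Some a" "enabled N' M' (one t')"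
    and q': "q' = (\<lambda>s. M' s - int (pre N' t' s), U' @ [t'])"
    by (cases rule: st_step.cases) auto
  have t'N: "t' \<in> trans N'" and M't: "\<forall>s. int (pre N' t' s) \<le> M' s" using t'(2) by (auto simp: enabled_one)
  from B have a: "list_all2 (\<lambda>t t'. lab N t = lab N' t') U U'" "set U \<subseteq> trans N" "set U' \<subseteq> trans N'"
    "mset_over M' (places N')" "(\<lambda>s. M' s + pre_ms N' (cnt U') s) \<in> reach N'"
    "mset_over M (places N)" "(\<lambda>s. M s + pre_ms N (cnt U) s) \<in> reach N"
    by (auto simp: Bm_def')
  obtain H HMU where H: "H \<in> NF" "fin H" "lab_empty N H" "M = Mx M' U' U H"
    and HMU: "fin HMU" "mset_over HMU Tp" "lab_empty N HMU" and g: "good HMU M' U' U H"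
    using Bm_good[OF B] by metis
  have MU: "(\<lambda>s. Mx M' U' U H s + pre_ms N (cnt U) s) = (\<lambda>s. M s + pre_ms N (cnt U) s)" using H(4) by simp
  note gd = g[unfolded good_def MU]
  define MMU where "MMU = Mx M' U' U HMU"
  have mMMU: "mset_over MMU (places N)" using gd by (simp add: MMU_def)
  have cd: "\<forall>a. can_do N' M' (Some a) \<longrightarrow> can_do N MMU (Some a)" using gd by (simp add: MMU_def)
  have le: "\<forall>x. H x \<le> HMU x" using gd by blast
  have negTm: "\<forall>u. H u < 0 \<longrightarrow> u \<in> Tm" using gd by blast
  have e: "\<forall>u v. H u < 0 \<and> 0 < H v \<longrightarrow> disjoint_ms (pre N u) (pre N v)" using gd by blast
  have ff: "\<forall>u v. H u < 0 \<and> enabled N (\<lambda>s. M s + pre_ms N (cnt U) s) (one v) \<and> lab N v \<noteq> None \<longrightarrow>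
                    disjoint_ms (pre N u) (pre N v)" using gd by blast
  have Mnn: "\<forall>s. 0 \<le> M s" using a(6) by (simp add: mset_over_def)
  have HMUvis: "lab N x \<noteq> None \<Longrightarrow> HMU x = 0" for x by (rule HMU_vis[OF HMU(1) HMU(2) HMU(3)])
  have Hvis: "\<forall>x. lab N x \<noteq> None \<longrightarrow> H x = 0"
  proof (intro allI impI)
    fix x assume lx: "lab N x \<noteq> None"
    show "H x = 0"
    proof (rule H_vis[OF H(2) H(3) _ lx])
      show "\<forall>x. lab N x \<noteq> None \<longrightarrow> H x \<le> 0" using le HMUvis by (metis)
    qed
  qed
  have dU: "\<forall>u x. H u < 0 \<longrightarrow> x \<in> set U \<longrightarrow> disjoint_ms (pre N u) (pre N x)"
  proof (intro allI impI)
    fix u x assume hu: "H u < 0" and xU: "x \<in> set U"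
    have xN: "x \<in> trans N" using xU a(2) by auto
    have enx: "enabled N (\<lambda>s. M s + pre_ms N (cnt U) s) (one x)"
      unfolding enabled_one
    proof (intro conjI xN allI)
      fix s show "int (pre N x s) \<le> M s + pre_ms N (cnt U) s"
        using pre_cnt_ge[OF xU, of N s] Mnn[rule_format, of s] by linarith
    qed
    obtain i where i: "i < length U" "U ! i = x" using xU by (meson in_set_conv_nth)
    have len: "length U = length U'" using a(1) by (rule list_all2_lengthD)
    have "lab N x = lab N' (U' ! i)" using list_all2_nthD[OF a(1) i(1)] i(2) by simp
    moreover have "U' ! i \<in> trans N'" using a(3) i len by auto
    ultimately have "lab N x \<noteq> None" using vis_N' by simp
    then show "disjoint_ms (pre N u) (pre N x)" using ff hu enx by blast
  qed
  define Bs where "Bs = (\<lambda>s. M' s + pre_ms N' (cnt U') s + (init_m N s - init_m N' s) - pre_ms N (cnt U) s)"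
  have MxBs: "Mx M' U' U K = (\<lambda>s. Bs s + eff N K s)" for K by (simp add: Mx_def Bs_def fun_eq_iff)
  have Bnn: "\<forall>s. 0 \<le> Bs s + pre_ms N (cnt U) s"
  proof
    fix s
    have "0 \<le> M' s" using a(4) by (simp add: mset_over_def)
    moreover have "0 \<le> pre_ms N' (cnt U') s" by (rule pre_cnt_nonneg)
    moreover have "0 \<le> init_m N s - init_m N' s" using M0' by (simp add: init_m_def)
    ultimately show "0 \<le> Bs s + pre_ms N (cnt U) s" by (simp add: Bs_def)
  qed
  have MBs: "M = (\<lambda>s. Bs s + eff N H s)" using H(4) MxBs by simp
  have Mnn2: "\<forall>s. 0 \<le> Bs s + eff N H s" using Mnn MBs by simp
  define Hp where "Hp = (\<lambda>x. max (H x) 0)"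
  have ph1: "tstar N (M, U) (\<lambda>s. Bs s + eff N Hp s, U)"
    using fire_phase1[OF H(2) negTm Hvis e dU Bnn Mnn2] MBs by (simp add: Hp_def)
  have nnB: "\<forall>s. 0 \<le> Bs s + eff N Hp s"
    using tau_star_inv[OF ph1] Mnn by simp
  have fHp: "fin Hp" using H(2) unfolding fin_def Hp_def by (rule finite_subset[rotated]) (auto simp: supp_def)
  define K where "K = (\<lambda>x. HMU x - Hp x)"
  have fK: "fin K" using HMU(1) fHp by (simp add: K_def fin_diff)
  have nnK: "\<forall>x. 0 \<le> K x" using le HMU(2) by (auto simp: K_def Hp_def mset_over_def)
  have sK: "supp K \<subseteq> Tp"
  proof
    fix x assume "x \<in> supp K"
    then have "K x \<noteq> 0" by (simp add: supp_def)
    show "x \<in> Tp"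
    proof (rule ccontr)
      assume "x \<notin> Tp"
      then have "HMU x = 0" using HMU(2) by (auto simp: mset_over_def supp_def)
      then have "Hp x = 0" using le[rule_format, of x] by (simp add: Hp_def)
      then show False using \<open>K x \<noteq> 0\<close> \<open>HMU x = 0\<close> by (simp add: K_def)
    qed
  qed
  have lK: "\<forall>x\<in>supp K. lab N x = None"
  proof
    fix x assume "x \<in> supp K"
    show "lab N x = None"
    proof (rule ccontr)
      assume "lab N x \<noteq> None"
      then have "HMU x = 0" "H x = 0" using HMUvis Hvis by auto
      then show False using \<open>x \<in> supp K\<close> by (simp add: K_def Hp_def supp_def)
    qed
  qed
  have effK: "(\<lambda>s. Bs s + eff N Hp s + eff N K s) = MMU"
    using fHp HMU(1) by (simp add: MMU_def MxBs K_def eff_diff fun_eq_iff)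
  have nnMMU: "\<forall>s. 0 \<le> Bs s + eff N Hp s + eff N K s" using mMMU effK
    by (metis mset_over_def)
  have ph2: "tstar N (\<lambda>s. Bs s + eff N Hp s, U) (\<lambda>s. Bs s + eff N Hp s + eff N K s, U)"
    by (rule fire_phase2[OF wfN h1 Tp_sub fK nnK sK lK nnB nnMMU])
  have ts: "tstar N (M,U) (MMU, U)" using rtranclp_trans[OF ph1 ph2] effK by simp
  have rMMU: "(\<lambda>s. MMU s + pre_ms N (cnt U) s) \<in> reach N" using tau_star_inv[OF ts] a(7) by simp
  have "fin HMU \<and> signed_over HMU (trans N) \<and> lab_empty N HMU"
    using HMU Tp_sub by (auto simp: signed_over_def mset_over_def)
  then obtain H' where H': "H' \<in> NF" "fin H'" "lab_empty N H'" "eff N H' = eff N HMU" using h4f by blast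
  have "MMU = Mx M' U' U H'" unfolding MMU_def by (rule Mx_eff_cong[OF H'(4)[symmetric]])
  then have ex: "\<exists>H\<in>NF. fin H \<and> lab_empty N H \<and> MMU = Mx M' U' U H" using H' by blast
  have B1: "Bm (MMU, U) (M', U')" unfolding Bm_def' by (intro conjI a(1-5) mMMU rMMU ex)
  have "can_do N' M' (Some a)" unfolding can_do_def using t' by blast
  then have "can_do N MMU (Some a)" using cd by blast
  then obtain t where t: "lab N t = Some a" "enabled N MMU (one t)" by (auto simp: can_do_def)
  have tN: "t \<in> trans N" and Mt: "\<forall>s. int (pre N t s) \<le> MMU s" using t(2) by (auto simp: enabled_one)
  have st1: "st_step N (MMU, U) (Start a) (\<lambda>s. MMU s - int (pre N t s), U @ [t])"
    by (rule st_start[OF t])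
  have B2: "Bm (\<lambda>s. MMU s - int (pre N t s), U @ [t]) q'"
    unfolding q' by (rule Bm_start[OF B1 tN t'N _ Mt M't]) (simp add: t t')
  show ?thesis using ts B1 B2 st1 by blast
qed

lemma no_tau_N': "\<not> st_step N' q Tau q'"
proof
  assume "st_step N' q Tau q'"
  then obtain t M2 where l: "lab N' t = None" and fi: "fires N' (fst q) (one t) M2" by (rule tau_step_cases)
  from fi have "t \<in> trans N'" by (simp add: fires_one)
  then have "lab N' t \<noteq> None" by (rule vis_N')
  then show False using l by simp
qed

lemma main: "bSTb_div_equiv N N'"
  unfolding bSTb_div_equiv_def
proof (intro exI conjI)
  show "Bm (init_m N, []) (init_m N', [])" by (rule Bm_init)
  show "bbisim_div (st_step N) (st_step N') Bm"
    unfolding bbisim_div_def bb_half_def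
  proof (intro conjI allI impI)
    fix p q \<alpha> p' assume A: "Bm p q \<and> st_step N p \<alpha> p'"
    obtain M U where p: "p = (M,U)" by fastforce
    obtain M' U' where q: "q = (M',U')" by fastforce
    have B: "Bm (M,U) (M',U')" and st: "st_step N (M,U) \<alpha> p'" using A p q by auto
    show "\<exists>q1 q'. (\<lambda>x y. st_step N' x Tau y)\<^sup>*\<^sup>* q q1 \<and> Bm p q1 \<and> Bm p' q' \<and>
                 (st_step N' q1 \<alpha> q' \<or> (\<alpha> = Tau \<and> q' = q1))"
      using st
    proof (cases rule: st_step.cases)
      case (st_start t a)
      obtain q' where "st_step N' (M',U') (Start a) q'" "Bm p' q'" using startA[OF B st[unfolded st_start(1)]] by blast
      then show ?thesis using A st_start(1) q by blast
    next
      case (st_fin n a)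
      note f = Bm_fin[OF B st_fin(3)]
      have "st_step N' (M',U') (Fin a n) (\<lambda>s. M' s + int (post N' (U'!n) s), take n U' @ drop (Suc n) U')"
        by (rule st_step.st_fin) (use f(1,2) st_fin in auto)
      then show ?thesis using f(4) st_fin(1,2) A q by blast
    next
      case (st_tau t M2)
      have "Bm p' q" using Bm_tau[OF B st_tau(3,4)] st_tau(2) q by simp
      then show ?thesis using A st_tau(1) by blast
    qed
  next
    fix p q ps assume A: "Bm p q \<and> ps 0 = p \<and> (\<forall>i. st_step N (ps i) Tau (ps (Suc i)) \<and> Bm (ps i) q)"
    then have False using no_div[of ps q] by auto
    then show "\<exists>qs. qs 0 = q \<and> (\<forall>i. st_step N' (qs i) Tau (qs (Suc i))) \<and> (\<forall>i j. Bm (ps i) (qs j))" by blast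
  next
    fix q p \<alpha> q' assume A: "Bm\<inverse>\<inverse> q p \<and> st_step N' q \<alpha> q'"
    obtain M U where p: "p = (M,U)" by fastforce
    obtain M' U' where q: "q = (M',U')" by fastforce
    have B: "Bm (M,U) (M',U')" and st: "st_step N' (M',U') \<alpha> q'" using A p q by auto
    show "\<exists>p1 p'. (\<lambda>x y. st_step N x Tau y)\<^sup>*\<^sup>* p p1 \<and> Bm\<inverse>\<inverse> q p1 \<and> Bm\<inverse>\<inverse> q' p' \<and>
                 (st_step N p1 \<alpha> p' \<or> (\<alpha> = Tau \<and> p' = p1))"
      using st
    proof (cases rule: st_step.cases)
      case (st_start t a)
      obtain p1 p' where "tstar N (M,U) p1" "Bm p1 (M',U')" "Bm p' q'" "st_step N p1 (Start a) p'"
        using startB[OF B st[unfolded st_start(1)]] by blast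
      then show ?thesis unfolding p q st_start(1) conversep_iff by blast
    next
      case (st_fin n a)
      have len: "length U = length U'" using B by (auto simp: Bm_def' dest: list_all2_lengthD)
      then have n: "n < length U" using st_fin(3) by simp
      note f = Bm_fin[OF B n]
      have "st_step N (M,U) (Fin a n) (\<lambda>s. M s + int (post N (U!n) s), take n U @ drop (Suc n) U)"
        by (rule st_step.st_fin) (use n f(2) st_fin in auto)
      then show ?thesis using f(4) st_fin(1,2) B p q by auto
    next
      case (st_tau t M2)
      have False using no_tau_N' st st_tau(1) by blast
      then show ?thesis ..
    qed
  next
    fix p q ps assume A: "Bm\<inverse>\<inverse> p q \<and> ps 0 = p \<and> (\<forall>i. st_step N' (ps i) Tau (ps (Suc i)) \<and> Bm\<inverse>\<inverse> (ps i) q)"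
    then have False using no_tau_N' by blast
    then show "\<exists>qs. qs 0 = q \<and> (\<forall>i. st_step N (qs i) Tau (qs (Suc i))) \<and> (\<forall>i j. Bm\<inverse>\<inverse> (ps i) (qs j))" by blast
  qed
qed

end



theorem theorem6p8:
  fixes N :: "('s, 't, 'a) pnet" and N' :: "('s, 't2, 'a) pnet"
    and Tp Tm :: "'t set" and NF :: "('t \<Rightarrow> int) set"
  assumes wfN: "wf_net N" and wfN': "wf_net N'" and plainN': "plain N'"
    and S'_sub: "places N' \<subseteq> places N"
    and M0': "\<forall>s. init N' s = (if s \<in> places N' then init N s else 0)"
    and Tp_sub: "Tp \<subseteq> trans N" and Tm_sub: "Tm \<subseteq> trans N"
    and NF_sub: "\<forall>H \<in> NF. signed_over H (trans N)"
    and h1: "acyclic_on N Tp"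
    and h2: "acyclic_on N Tm"
    and h3: "\<forall>t \<in> trans N. lab N t \<noteq> None \<longrightarrow>
       (\<exists>t' \<in> trans N'. lab N' t' = lab N t \<and>
          (\<forall>s. enat (pre N' t' s) \<le>
                 origins N Tp (places N' \<union> {s \<in> places N. 0 < init N s}) (Tr t) s) \<and>
          (\<exists>G. fin G \<and> mset_over G (trans N) \<and> lab_empty N G \<and>
               eff N' (one t') = eff N (\<lambda>x. one t x + G x)))"
    and h4: "\<exists>f :: 't \<Rightarrow> nat. (\<forall>t \<in> trans N. 0 < f t) \<and>
       (\<forall>G. fin G \<and> signed_over G (trans N) \<and> lab_empty N G \<longrightarrow>
          (\<exists>H \<in> NF. fin H \<and> lab_empty N H \<and> eff N H = eff N G \<and>
             (\<Sum>t\<in>supp H. H t * int (f t)) = (\<Sum>t\<in>supp G. G t * int (f t))))"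
    and h5: "\<forall>M' U' U. mset_over M' (places N') \<and> mset_over U' (trans N') \<and> fin U' \<and>
       mset_over U (trans N) \<and> fin U \<and> labm N U = labm N' U' \<and>
       (\<lambda>s. M' s + pre_ms N' U' s) \<in> reach N' \<longrightarrow>
       (\<exists>HMU. fin HMU \<and> mset_over HMU Tp \<and> lab_empty N HMU \<and>
          (\<forall>H \<in> NF. fin H \<longrightarrow>
             (let M = (\<lambda>s. M' s + pre_ms N' U' s + (init_m N s - init_m N' s) + eff N H s - pre_ms N U s);
                  MMU = (\<lambda>s. M' s + pre_ms N' U' s + (init_m N s - init_m N' s) + eff N HMU s - pre_ms N U s);
                  MU = (\<lambda>s. M s + pre_ms N U s)
              in mset_over M (places N) \<and> MU \<in> reach N \<longrightarrow>
                 mset_over MMU (places N) \<and>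
                 (\<forall>a. can_do N' M' (Some a) \<longrightarrow> can_do N MMU (Some a)) \<and>
                 (\<forall>t. H t \<le> HMU t) \<and>
                 (\<forall>u. H u < 0 \<longrightarrow> u \<in> Tm) \<and>
                 (\<forall>u t. H u < 0 \<and> 0 < H t \<longrightarrow> disjoint_ms (pre N u) (pre N t)) \<and>
                 (\<forall>u t. H u < 0 \<and> enabled N MU (one t) \<and> lab N t \<noteq> None \<longrightarrow>
                    disjoint_ms (pre N u) (pre N t)) \<and>
                 (\<forall>t u t' u'. enabled N MU (\<lambda>x. one t x + one u x) \<and>
                    t' \<in> trans N' \<and> u' \<in> trans N' \<and> lab N' t' = lab N t \<and> lab N' u' = lab N u \<longrightarrow>
                    disjoint_ms (pre N' t') (pre N' u')))))"
  shows "bSTb_div_equiv N N'"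
proof -
  obtain f :: "'t \<Rightarrow> nat" where f: "\<forall>t \<in> trans N. 0 < f t"
    "\<forall>G. fin G \<and> signed_over G (trans N) \<and> lab_empty N G \<longrightarrow>
          (\<exists>H \<in> NF. fin H \<and> lab_empty N H \<and> eff N H = eff N G \<and>
             (\<Sum>t\<in>supp H. H t * int (f t)) = (\<Sum>t\<in>supp G. G t * int (f t)))"
    using h4 by blast
  interpret ctx N N' Tp Tm NF f
    by (rule ctx.intro[OF wfN wfN' plainN' S'_sub M0' Tp_sub Tm_sub NF_sub h1 h2 h3 f(1) f(2) h5])
  show ?thesis by (rule main)
qed

end
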